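(* Assume the Frame condition (FC) holds at $\mathbf a_0\in(0,\infty)^n$ (in the interior of the domain of $\Phi$) with common value $\lambda=\partial_{a^i}\tilde g_i(\mathbf a_0)$, and assume $\lambda>0$. Set $\gamma^i_{jl}=\partial_{a^j}\partial_{a^l}\tilde g_i(\mathbf a_0)$, $q_i=\sqrt{\tilde g_i(\mathbf a_0)}$, and for $c\in\mathbb R$ $$\Gamma^i_{jl}=\frac{c}{\lambda^{3/2}}\frac{q_jq_l}{q_i}\gamma^i_{jl}.$$ Then for all $1\le i,j,l\le n$, $\Gamma^i_{jl}=\Gamma^i_{lj}=\Gamma^j_{il}$.
   Context: Multi-species zero-range setting: rates $g_i$ on $\mathbb Z_+^n$ satisfying (ND) $g_i(\mathbf k)=0\iff k^i=0$, (INV) $g_i(\mathbf k)/g_i(\mathbf k-e_j)=g_j(\mathbf k)/g_j(\mathbf k-e_i)$ and (ORI) $\liminf_{|\mathbf k|\to\infty}\mathbf g!(\mathbf k)^{1/|\mathbf k|}>0$, where $\mathbf g!(\mathbf k)$ is the product of rates along an increasing unit-step path from $\mathbf 0$ to $\mathbf k$. Invariant one-site law $\bar\nu_{\boldsymbol\varphi}(\mathbf k)=Z_{\boldsymbol\varphi}^{-1}\boldsymbol\varphi^{\mathbf k}/\mathbf g!(\mathbf k)$, reparametrized by its mean $\mathbf a$ as $\nu_{\mathbf a}$; $\tilde g_i(\mathbf a)=E_{\nu_{\mathbf a}}[g_i]$ equals the $i$-th fugacity. $\Gamma(\mathbf a)$ (not to be confused with the coefficients $\Gamma^i_{jl}$)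 is the covariance matrix of $\nu_{\mathbf a}$. (FC) at $\mathbf a_0$: $\partial_{a^i}\tilde g_i(\mathbf a_0)=\lambda$ for all $i$ and $\partial_{a^j}\tilde g_i(\mathbf a_0)=0$ for $i\neq j$. These $\Gamma^i_{jl}$ are the coupling constants of the canonical form $\partial_t\bar{\mathcal Y}^i=\frac12\Delta\bar{\mathcal Y}^i+\sum_{j,l}\Gamma^i_{jl}\nabla(\bar{\mathcal Y}^j\bar{\mathcal Y}^l)+\nabla\dot{\mathcal W}^i$ of the limiting coupled KPZ–Burgers equation. *)

theory Defs
  imports "HOL-Analysis.Analysis"
begin

text \<open>Species are indexed by a finite type 'n
 (so n = CARD('n)); particle configurations on one site are vectors k :: nat^'n;
 rates are g :: 'n => nat^'n => real, with g i k the rate of species i.\<close>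

definition unitv :: "'n::finite \<Rightarrow> nat^'n" where
  "unitv j = (\<chi> m. if m = j then 1 else 0)"

definition absk :: "nat^'n::finite \<Rightarrow> nat" where
  "absk k = (\<Sum>i\<in>UNIV. k $ i)"

text \<open>An increasing unit-step path from 0 to k, encoded by the list of species
 whose coordinate is incremented at each step.\<close>
definition is_path :: "'n::finite list \<Rightarrow> nat^'n \<Rightarrow> bool" where
  "is_path p k \<longleftrightarrow> (\<forall>i. count_list p i = k $ i)"

definition path_pos :: "'n::finite list \<Rightarrow> nat \<Rightarrow> nat^'n" where
  "path_pos p m = (\<chi> i. count_list (take m p) i)"

text \<open>g!(k): product of the rates along an (arbitrarily chosen) increasing path;
 under (INV) it does not depend on the path.\<close>
definition gfact :: "('n::finite \<Rightarrow> nat^'n \<Rightarrow> real) \<Rightarrow> nat^'n \<Rightarrow> real" where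
  "gfact g k = (let p = (SOME p. is_path p k) in
      \<Prod>m<length p. g (p ! m) (path_pos p (Suc m)))"

definition cond_ND :: "('n::finite \<Rightarrow> nat^'n \<Rightarrow> real) \<Rightarrow> bool" where
  "cond_ND g \<longleftrightarrow> (\<forall>i k. g i k = 0 \<longleftrightarrow> k $ i = 0)"

definition cond_INV :: "('n::finite \<Rightarrow> nat^'n \<Rightarrow> real) \<Rightarrow> bool" where
  "cond_INV g \<longleftrightarrow> (\<forall>i j k. i \<noteq> j \<and> k $ i > 0 \<and> k $ j > 0 \<longrightarrow>
       g i k / g i (k - unitv j) = g j k / g j (k - unitv i))"

text \<open>liminf_{|k|->oo} g!(k)^(1/|k|) > 0, written out.\<close>
definition cond_ORI :: "('n::finite \<Rightarrow> nat^'n \<Rightarrow> real) \<Rightarrow> bool" where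
  "cond_ORI g \<longleftrightarrow> (\<exists>c>0. \<exists>N. \<forall>k. absk k \<ge> N \<longrightarrow> gfact g k powr (1 / real (absk k)) \<ge> c)"

definition vpow :: "real^'n::finite \<Rightarrow> nat^'n \<Rightarrow> real" where
  "vpow \<phi> k = (\<Prod>i\<in>UNIV. (\<phi> $ i) ^ (k $ i))"

definition weight :: "('n::finite \<Rightarrow> nat^'n \<Rightarrow> real) \<Rightarrow> real^'n \<Rightarrow> nat^'n \<Rightarrow> real" where
  "weight g \<phi> k = vpow \<phi> k / gfact g k"

definition Zpart :: "('n::finite \<Rightarrow> nat^'n \<Rightarrow> real) \<Rightarrow> real^'n \<Rightarrow> real" where
  "Zpart g \<phi> = infsum (weight g \<phi>) UNIV"

definition fug_dom :: "('n::finite \<Rightarrow> nat^'n \<Rightarrow> real) \<Rightarrow> (real^'n) set" where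
  "fug_dom g = {\<phi>. (\<forall>i. \<phi> $ i \<ge> 0) \<and> weight g \<phi> summable_on UNIV}"

definition mean :: "('n::finite \<Rightarrow> nat^'n \<Rightarrow> real) \<Rightarrow> real^'n \<Rightarrow> real^'n" where
  "mean g \<phi> = (\<chi> i. infsum (\<lambda>k. real (k $ i) * weight g \<phi> k) UNIV / Zpart g \<phi>)"

text \<open>Domain of Phi (densities attained by fugacities in the interior of the
 fugacity domain) and the fugacity as a function of the density:
 gtilde g a = Phi(a), whose i-th component is tilde g_i(a).\<close>
definition dens_dom :: "('n::finite \<Rightarrow> nat^'n \<Rightarrow> real) \<Rightarrow> (real^'n) set" where
  "dens_dom g = mean g ` interior (fug_dom g)"

definition gtilde :: "('n::finite \<Rightarrow> nat^'n \<Rightarrow> real) \<Rightarrow> real^'n \<Rightarrow> real^'n" where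
  "gtilde g a = (SOME \<phi>. \<phi> \<in> interior (fug_dom g) \<and> mean g \<phi> = a)"

definition partial :: "'n::finite \<Rightarrow> (real^'n \<Rightarrow> real) \<Rightarrow> real^'n \<Rightarrow> real" where
  "partial j f a = deriv (\<lambda>t. f (a + t *\<^sub>R axis j 1)) 0"

end

theory Submission
  imports Defs "HOL-Homology.Invariance_of_Domain"
begin
lemma count_list_replicate_same: "count_list (replicate n x) x = n"
  by (induction n) auto

lemma count_list_replicate_other: "x \<noteq> y \<Longrightarrow> count_list (replicate n x) y = 0"
  by (induction n) auto

lemma count_list_concat_rep:
  "count_list (concat (map (\<lambda>j. replicate (f j) j) xs)) i = (\<Sum>j\<leftarrow>xs. if j = i then f j else 0)"
  by (induction xs) (auto simp: count_list_append count_list_replicate_same count_list_replicate_other)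

lemma is_path_exists: "\<exists>p. is_path p (k::nat^'n::finite)"
proof -
  obtain xs :: "'n list" where xs: "set xs = UNIV" "distinct xs"
    using finite_distinct_list[of "UNIV::'n set"] by auto
  let ?p = "concat (map (\<lambda>j. replicate (k$j) j) xs)"
  have "count_list ?p i = k $ i" for i
  proof -
    have "count_list ?p i = (\<Sum>j\<leftarrow>xs. if j = i then k$j else 0)"
      by (rule count_list_concat_rep)
    also have "\<dots> = (\<Sum>j\<in>set xs. if j = i then k$j else 0)"
      using xs(2) by (simp add: sum_list_distinct_conv_sum_set)
    also have "\<dots> = k $ i" using xs(1) by simp
    finally show ?thesis .
  qed
  then show ?thesis unfolding is_path_def by blast
qed

lemma gpos:
  assumes nonneg: "\<forall>i k. g i k \<ge> 0" and ND: "cond_ND g"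
  shows "k $ i > 0 \<Longrightarrow> g i k > 0"
  using nonneg ND unfolding cond_ND_def by (metis less_eq_real_def not_gr0)

lemma gfact_pos:
  assumes nonneg: "\<forall>i k. g i k \<ge> 0" and ND: "cond_ND g"
  shows "gfact g k > 0"
proof -
  define p where "p = (SOME p. is_path p k)"
  have "\<forall>m<length p. g (p ! m) (path_pos p (Suc m)) > 0"
  proof (intro allI impI)
    fix m assume m: "m < length p"
    have "p ! m \<in> set (take (Suc m) p)"
      using m by (simp add: in_set_conv_nth) (metis lessI nth_take)
    then have "count_list (take (Suc m) p) (p ! m) > 0"
      by (metis count_list_0_iff gr0I)
    then have "path_pos p (Suc m) $ (p ! m) > 0" by (simp add: path_pos_def)
    then show "g (p ! m) (path_pos p (Suc m)) > 0" using gpos[OF nonneg ND] by blast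
  qed
  then show ?thesis unfolding gfact_def Let_def p_def[symmetric]
    by (intro prod_pos) auto
qed

lemma vpow_nonneg: "(\<forall>i. x$i \<ge> 0) \<Longrightarrow> vpow x k \<ge> 0"
  unfolding vpow_def by (intro prod_nonneg) auto

lemma vpow_pos: "(\<forall>i. x$i > 0) \<Longrightarrow> vpow x k > 0"
  unfolding vpow_def by (intro prod_pos) auto

lemma vpow_mono: "(\<forall>i. 0 \<le> x$i \<and> x$i \<le> y$i) \<Longrightarrow> vpow x k \<le> vpow y k"
  unfolding vpow_def by (intro prod_mono) (auto intro: power_mono)

lemma vpow_scale: "vpow (r *\<^sub>R x) k = r ^ absk k * vpow x k"
  unfolding vpow_def absk_def by (simp add: power_mult_distrib prod.distrib power_sum)

lemma weight_nonneg:
  assumes "\<forall>i k. g i k \<ge> 0" "cond_ND g" "\<forall>i. x$i \<ge> 0"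
  shows "weight g x k \<ge> 0"
  unfolding weight_def using gfact_pos[OF assms(1,2)] vpow_nonneg[OF assms(3)]
  by (simp add: less_imp_le)

lemma weight_pos:
  assumes "\<forall>i k. g i k \<ge> 0" "cond_ND g" "\<forall>i. x$i > 0"
  shows "weight g x k > 0"
  unfolding weight_def using gfact_pos[OF assms(1,2)] vpow_pos[OF assms(3)] by simp

lemma weight_mono:
  assumes "\<forall>i k. g i k \<ge> 0" "cond_ND g" "\<forall>i. 0 \<le> x$i \<and> x$i \<le> y$i"
  shows "weight g x k \<le> weight g y k"
  unfolding weight_def using gfact_pos[OF assms(1,2)] vpow_mono[OF assms(3)]
  by (simp add: divide_right_mono less_imp_le)

lemma weight_scale: "weight g (r *\<^sub>R x) k = r ^ absk k * weight g x k"
  unfolding weight_def vpow_scale by simp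

lemma fug_dom_down:
  assumes "\<forall>i k. g i k \<ge> 0" "cond_ND g" "y \<in> fug_dom g" "\<forall>i. 0 \<le> x$i \<and> x$i \<le> y$i"
  shows "x \<in> fug_dom g"
proof -
  have "weight g y summable_on UNIV" using assms(3) by (simp add: fug_dom_def)
  then have "weight g x summable_on UNIV"
    by (rule summable_on_comparison_test)
       (use weight_mono[OF assms(1,2,4)] weight_nonneg[OF assms(1,2)] assms(4) in auto)
  then show ?thesis using assms(4) by (simp add: fug_dom_def)
qed

lemma comp_le_norm: "\<bar>x $ i - y $ i\<bar> \<le> norm (x - y)" for x y :: "real^'n::finite"
  by (metis component_le_norm_cart vector_minus_component)

lemma U_char1:
  assumes "x \<in> interior (fug_dom g)"
  shows "(\<forall>i. x$i > 0) \<and> (\<exists>r>1. r *\<^sub>R x \<in> fug_dom g)"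
proof -
  obtain e where e: "e > 0" "ball x e \<subseteq> fug_dom g"
    using assms by (meson interior_subset open_contains_ball open_interior subset_trans)
  have pos: "x$i > 0" for i
  proof -
    let ?y = "x - (e/2) *\<^sub>R axis i 1"
    have "norm (x - ?y) = e/2" using e by (simp add: norm_axis_1)
    then have "?y \<in> fug_dom g" using e by (auto simp: dist_norm)
    then have "?y $ i \<ge> 0" unfolding fug_dom_def by blast
    then show ?thesis using e by (simp add: axis_def)
  qed
  define r where "r = 1 + e / (2 * (norm x + 1))"
  have "2 * (norm x + 1) > 0" by (smt (verit) norm_ge_zero)
  then have r1: "r > 1" using e by (simp add: r_def)
  have "norm (r *\<^sub>R x - x) = (r - 1) * norm x"
    using r1 by (metis abs_of_pos diff_gt_0_iff_gt norm_scaleR scaleR_diff_left scaleR_one)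
  also have "\<dots> = e * norm x / (2 * (norm x + 1))" by (simp add: r_def)
  also have "\<dots> < e"
  proof -
    have "norm x / (2 * (norm x + 1)) < 1" by (smt (verit, best) le_divide_eq_1_pos norm_ge_zero)
    then show ?thesis using e(1) by (metis mult.right_neutral mult_strict_left_mono times_divide_eq_right)
  qed
  finally have "r *\<^sub>R x \<in> ball x e" by (simp add: dist_norm norm_minus_commute)
  then show ?thesis using pos r1 e by blast
qed

lemma U_char2:
  fixes x :: "real^'n::finite"
  assumes nonneg: "\<forall>i k. g i k \<ge> 0" and ND: "cond_ND g"
    and pos: "\<forall>i. x$i > 0" and r: "r > 1" "r *\<^sub>R x \<in> fug_dom g"
  shows "x \<in> interior (fug_dom g)"
proof -
  define m where "m = Min (range (\<lambda>i. x$i))"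
  have m: "m > 0" "\<And>i. m \<le> x$i"
    using pos by (auto simp: m_def)
  define d where "d = min (r - 1) 1 * m"
  have d: "d > 0" using m r by (simp add: d_def)
  have "ball x d \<subseteq> fug_dom g"
  proof
    fix y assume "y \<in> ball x d"
    then have yb: "\<bar>y$i - x$i\<bar> < d" for i
      using comp_le_norm[of y i x] by (simp add: dist_norm norm_minus_commute)
    have "0 \<le> y$i \<and> y$i \<le> (r *\<^sub>R x)$i" for i
    proof -
      have xi: "m \<le> x$i" using m(2) by blast
      have "d \<le> 1 * m" unfolding d_def using m(1) by (intro mult_right_mono) auto
      also have "\<dots> \<le> x$i" using xi by simp
      finally have d1: "d \<le> x$i" .
      have "d \<le> (r - 1) * m" unfolding d_def using m(1) by (intro mult_right_mono) auto
      also have "\<dots> \<le> (r-1) * x$i" using xi r by (intro mult_left_mono) auto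
      finally have "d \<le> (r-1) * x$i" .
      note d1 this
      then show ?thesis using yb[of i] by (auto simp: algebra_simps)
    qed
    then show "y \<in> fug_dom g" using fug_dom_down[OF nonneg ND r(2)] by blast
  qed
  then show ?thesis using d by (meson interior_maximal open_ball centre_in_ball subsetD)
qed

definition bx :: "nat \<Rightarrow> (nat^'n::finite) set" where
  "bx N = {k. \<forall>i. k$i \<le> N}"

lemma finite_bx: "finite (bx N :: (nat^'n::finite) set)"
proof -
  have "bx N \<subseteq> vec_lambda ` (PiE UNIV (\<lambda>_::'n. {..N}))"
  proof
    fix k :: "nat^'n" assume "k \<in> bx N"
    then have "vec_nth k \<in> PiE UNIV (\<lambda>_. {..N})" by (auto simp: bx_def)
    then show "k \<in> vec_lambda ` (PiE UNIV (\<lambda>_::'n. {..N}))"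
      by (metis image_eqI vec_nth_inverse)
  qed
  moreover have "finite (PiE (UNIV::'n set) (\<lambda>_. {..N}))" by (intro finite_PiE) auto
  ultimately show ?thesis by (meson finite_imageI finite_subset)
qed

lemma finite_bounded_vecs:
  assumes "finite (X :: (nat^'n::finite) set)"
  shows "\<exists>N. X \<subseteq> bx N"
proof -
  have "finite ((\<lambda>(k,i). k$i) ` (X \<times> (UNIV::'n set)))" using assms by auto
  then obtain N where "\<forall>v\<in>(\<lambda>(k,i). k$i) ` (X \<times> (UNIV::'n set)). v \<le> N"
    using finite_nat_set_iff_bounded_le by blast
  then have "X \<subseteq> bx N" by (auto simp: bx_def)
  then show ?thesis ..
qed

lemma bx_mono: "N \<le> M \<Longrightarrow> bx N \<subseteq> bx M"
  unfolding bx_def using le_trans by blast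

lemma bx_filterlim: "filterlim (bx :: nat \<Rightarrow> (nat^'n::finite) set) (finite_subsets_at_top UNIV) sequentially"
  unfolding filterlim_finite_subsets_at_top
proof (intro allI impI)
  fix X :: "(nat^'n) set" assume "finite X \<and> X \<subseteq> UNIV"
  then obtain N where N: "X \<subseteq> bx N" using finite_bounded_vecs by blast
  show "\<forall>\<^sub>F y in sequentially. finite (bx y) \<and> X \<subseteq> bx y \<and> bx y \<subseteq> UNIV"
    using eventually_ge_at_top[of N]
    by eventually_elim (use N bx_mono finite_bx in blast)
qed

lemma bx_lim:
  fixes h :: "nat^'n::finite \<Rightarrow> real"
  assumes "h summable_on UNIV"
  shows "(\<lambda>N. sum h (bx N)) \<longlonglongrightarrow> infsum h UNIV"
proof -
  have "filterlim (sum h) (nhds (infsum h UNIV)) (finite_subsets_at_top UNIV)"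
    using assms unfolding summable_iff_has_sum_infsum has_sum_def .
  then show ?thesis using bx_filterlim by (rule filterlim_compose)
qed

lemma tail_eq:
  fixes h :: "nat^'n::finite \<Rightarrow> real"
  assumes "h summable_on UNIV"
  shows "infsum h (UNIV - bx N) = infsum h UNIV - sum h (bx N)"
proof -
  have "h summable_on bx N" using finite_bx by (rule summable_on_finite)
  then show ?thesis using infsum_Diff[OF assms _ subset_UNIV, of "bx N"]
    by (simp add: infsum_finite[OF finite_bx])
qed

lemma poly_geom_bound:
  fixes c :: real
  assumes "0 < c" "c < 1"
  shows "\<exists>C. \<forall>n. (1 + real n)^q * c^n \<le> C"
proof -
  define e where "e = root (Suc q) c"
  have e: "0 < e" "e < 1" "e ^ Suc q = c"
    using assms by (auto simp: e_def real_root_pow_pos simp del: power_Suc)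
  have l1: "(\<lambda>n. real n * e^n) \<longlonglongrightarrow> 0"
    using powser_times_n_limit_0[of e] e by simp
  have l2: "(\<lambda>n. e^n) \<longlonglongrightarrow> 0" using e by (simp add: LIMSEQ_power_zero)
  have "(\<lambda>n. (1 + real n) * e^n) \<longlonglongrightarrow> 0"
    using tendsto_add[OF l2 l1] by (simp add: algebra_simps)
  then have "Bseq (\<lambda>n. (1 + real n) * e^n)"
    using convergent_imp_Bseq convergentI by blast
  then obtain K where K: "K > 0" "\<And>n. norm ((1 + real n) * e^n) \<le> K"
    unfolding Bseq_def by blast
  have "(1 + real n)^q * c^n \<le> K^q" for n
  proof -
    have "(1 + real n)^q * c^n = ((1 + real n) * e^n)^q * e^n"
      by (simp add: e(3)[symmetric] power_mult_distrib power_mult[symmetric] mult.commute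
            power_add[symmetric] mult.assoc)
    also have "\<dots> \<le> ((1 + real n) * e^n)^q * 1"
      using e by (intro mult_left_mono) (auto simp: power_le_one)
    also have "\<dots> \<le> K^q"
      using K(2)[of n] e by (simp add: power_mono)
    finally show ?thesis .
  qed
  then show ?thesis by blast
qed

lemma vec_nth_has_derivative: "((\<lambda>x::real^'n::finite. x$i) has_derivative (\<lambda>y. y$i)) F"
  by (rule bounded_linear_imp_has_derivative) (rule bounded_linear_vec_nth)

lemma vpow_deriv:
  fixes y :: "real^'n::finite"
  assumes "\<forall>i. y$i > 0"
  shows "((\<lambda>z. vpow z k) has_derivative (\<lambda>h. \<Sum>i\<in>UNIV. h$i * real (k$i) * vpow y k / y$i)) (at y)"
proof -
  have d: "((\<lambda>z. (z$i)^(k$i)) has_derivative (\<lambda>h. real (k$i) * (y$i)^(k$i - 1) * h$i)) (at y)" for i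
    by (auto intro!: derivative_eq_intros vec_nth_has_derivative simp: algebra_simps)
  have "((\<lambda>z. vpow z k) has_derivative
          (\<lambda>h. \<Sum>i\<in>UNIV. real (k$i) * (y$i)^(k$i - 1) * h$i * (\<Prod>j\<in>UNIV - {i}. (y$j)^(k$j)))) (at y)"
    unfolding vpow_def by (rule has_derivative_prod) (use d in auto)
  moreover have "real (k$i) * (y$i)^(k$i - 1) * h$i * (\<Prod>j\<in>UNIV - {i}. (y$j)^(k$j))
      = h$i * real (k$i) * vpow y k / y$i" for i h
  proof (cases "k$i = 0")
    case True then show ?thesis by simp
  next
    case False
    have "vpow y k = (y$i)^(k$i) * (\<Prod>j\<in>UNIV - {i}. (y$j)^(k$j))"
      unfolding vpow_def by (simp add: prod.remove)
    moreover have "(y$i)^(k$i) = y$i * (y$i)^(k$i - 1)"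
      using False by (metis power_eq_if)
    ultimately show ?thesis using assms[rule_format, of i] by (simp add: field_simps)
  qed
  ultimately show ?thesis by simp
qed

lemma ball_comp:
  fixes x :: "real^'n::finite"
  assumes "\<forall>i. x$i > 0" "s > 0"
  shows "\<exists>d>0. \<forall>y\<in>ball x d. \<forall>i. (1 - s) * x$i \<le> y$i \<and> y$i \<le> (1 + s) * x$i"
proof -
  define m where "m = Min (range (\<lambda>i. x$i))"
  have m: "m > 0" "\<And>i. m \<le> x$i"
    using assms by (auto simp: m_def)
  have "\<forall>y\<in>ball x (s*m). \<forall>i. (1 - s) * x$i \<le> y$i \<and> y$i \<le> (1 + s) * x$i"
  proof (intro ballI allI)
    fix y i assume "y \<in> ball x (s*m)"
    then have "\<bar>y$i - x$i\<bar> < s * m"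
      using comp_le_norm[of y i x] by (simp add: dist_norm norm_minus_commute)
    moreover have "s * m \<le> s * x$i" using m assms by (intro mult_left_mono) auto
    ultimately show "(1 - s) * x$i \<le> y$i \<and> y$i \<le> (1 + s) * x$i"
      by (auto simp: algebra_simps)
  qed
  then show ?thesis using m assms by (intro exI[of _ "s*m"]) auto
qed

lemma has_derivative_vecI:
  fixes f :: "'a::real_normed_vector \<Rightarrow> real^'n::finite"
  assumes "\<And>i. ((\<lambda>x. f x $ i) has_derivative (\<lambda>h. f' h $ i)) (at a within S)"
  shows "(f has_derivative f') (at a within S)"
proof -
  have "\<forall>b\<in>Basis. ((\<lambda>x. f x \<bullet> b) has_derivative (\<lambda>h. f' h \<bullet> b)) (at a within S)"
  proof
    fix b :: "real^'n" assume "b \<in> Basis"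
    then obtain i where "b = axis i 1" by (auto simp: Basis_vec_def)
    then show "((\<lambda>x. f x \<bullet> b) has_derivative (\<lambda>h. f' h \<bullet> b)) (at a within S)"
      using assms[of i] by (simp add: inner_axis)
  qed
  then show ?thesis
    using has_derivative_componentwise_within by blast
qed

definition TT :: "(nat^'n::finite \<Rightarrow> real) \<Rightarrow> ('n \<Rightarrow> nat^'n \<Rightarrow> real) \<Rightarrow> real^'n \<Rightarrow> real" where
  "TT f g x = infsum (\<lambda>k. f k * weight g x k) UNIV"

lemma infsum_divide_const: "infsum (\<lambda>k. a k / (c::real)) A = infsum a A / c"
  by (simp add: divide_inverse infsum_cmult_left')

lemma comp_le_absk: "k $ m \<le> absk k"
  unfolding absk_def by (rule member_le_sum) auto

lemma absk_zero: "absk (0::nat^'n::finite) = 0"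
  unfolding absk_def by simp

context
  fixes g :: "'n::finite \<Rightarrow> nat^'n \<Rightarrow> real"
  assumes nonneg: "\<forall>i k. g i k \<ge> 0" and ND: "cond_ND g"
begin

lemma term_deriv:
  assumes "\<forall>i. y$i > 0"
  shows "((\<lambda>z. f k * weight g z k) has_derivative
           (\<lambda>h. \<Sum>m\<in>UNIV. h$m * (real (k$m) * f k * weight g y k / y$m))) (at y)"
proof -
  have "((\<lambda>z. (f k / gfact g k) * vpow z k) has_derivative
          (\<lambda>h. (f k / gfact g k) * (\<Sum>i\<in>UNIV. h$i * real (k$i) * vpow y k / y$i))) (at y)"
    by (rule has_derivative_mult_right) (rule vpow_deriv[OF assms])
  moreover have "(\<lambda>z. (f k / gfact g k) * vpow z k) = (\<lambda>z. f k * weight g z k)"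
    by (simp add: weight_def)
  moreover have "(\<lambda>h. (f k / gfact g k) * (\<Sum>i\<in>UNIV. h$i * real (k$i) * vpow y k / y$i))
       = (\<lambda>h. \<Sum>m\<in>UNIV. h$m * (real (k$m) * f k * weight g y k / y$m))"
    by (simp add: weight_def sum_distrib_left, intro ext sum.cong refl, simp add: algebra_simps)
  ultimately show ?thesis by simp
qed

lemma TT_deriv:
  fixes f :: "nat^'n \<Rightarrow> real" and x :: "real^'n"
  assumes xU: "x \<in> interior (fug_dom g)" and fnn: "\<forall>k. 0 \<le> f k"
    and fb: "\<forall>k. f k \<le> B * (1 + real (absk k))^p"
  shows "(\<lambda>k. f k * weight g x k) summable_on UNIV"
    and "(TT f g has_derivative (\<lambda>h. \<Sum>m\<in>UNIV. h$m * (TT (\<lambda>k. real (k$m) * f k) g x / x$m))) (at x)"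
proof -
  obtain r where r: "r > 1" "r *\<^sub>R x \<in> fug_dom g" and xpos: "\<forall>i. x$i > 0"
    using U_char1[OF xU] by blast
  define W where "W k = weight g (r *\<^sub>R x) k" for k
  have Wsum: "W summable_on UNIV" using r(2) by (simp add: fug_dom_def W_def[abs_def])
  have Wnn: "W k \<ge> 0" for k
    unfolding W_def using xpos r(1) by (intro weight_nonneg[OF nonneg ND]) (auto simp: less_imp_le)
  define s where "s = min ((r-1)/2) (1/2)"
  have s: "s > 0" "s \<le> 1/2" "1 + s < r" using r(1) by (auto simp: s_def min_def field_simps)
  obtain d where d: "d > 0" and dS: "\<And>y i. y \<in> ball x d \<Longrightarrow> (1 - s) * x$i \<le> y$i \<and> y$i \<le> (1 + s) * x$i"
    using ball_comp[OF xpos s(1)] by blast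
  define S where "S = ball x d"
  have xS: "x \<in> S" using d by (simp add: S_def)
  have ypos: "y$i > 0" if "y \<in> S" for y i
  proof -
    have "(1 - s) * x$i > 0" using s xpos by simp
    then show ?thesis using dS[of y i] that by (simp add: S_def)
  qed
  have ylow: "x$i \<le> 2 * y$i" if "y \<in> S" for y i
  proof -
    have "(1/2) * x$i \<le> (1 - s) * x$i" using s xpos[rule_format, of i] by (intro mult_right_mono) auto
    then show ?thesis using dS[of y i] that by (simp add: S_def)
  qed
  define c where "c = (1 + s) / r"
  have c: "0 < c" "c < 1" using s r by (auto simp: c_def)
  obtain C where C: "\<And>n. (1 + real n)^(Suc p) * c^n \<le> C"
    using poly_geom_bound[OF c] by blast
  have B0: "B \<ge> 0"
  proof -
    have "0 \<le> B * (1 + real (absk (0::nat^'n)))^p" using fnn fb by (meson order_trans)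
    moreover have "(1 + real (absk (0::nat^'n)))^p > 0" by simp
    ultimately show ?thesis by (simp add: zero_le_mult_iff)
  qed
  have wb: "weight g y k \<le> c ^ absk k * W k" if "y \<in> S" for y k
  proof -
    have "\<forall>i. 0 \<le> y$i \<and> y$i \<le> ((1 + s) *\<^sub>R x)$i"
      using ypos[OF that] dS[of y] that unfolding S_def by (auto simp: less_imp_le)
    then have "weight g y k \<le> weight g ((1 + s) *\<^sub>R x) k"
      by (rule weight_mono[OF nonneg ND])
    also have "\<dots> = (1+s) ^ absk k * weight g x k" by (rule weight_scale)
    also have "\<dots> = c ^ absk k * W k"
      using r(1) by (simp add: W_def weight_scale c_def power_divide)
    finally show ?thesis .
  qed
  have wnn: "weight g y k \<ge> 0" if "y \<in> S" for y k
    using ypos[OF that] by (intro weight_nonneg[OF nonneg ND]) (auto simp: less_imp_le)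
  have core: "(1 + real (absk k)) * (f k * weight g y k) \<le> B * C * W k" if "y \<in> S" for y k
  proof -
    have "(1 + real (absk k)) * (f k * weight g y k)
        \<le> (1 + real (absk k)) * (B * (1 + real (absk k))^p * (c ^ absk k * W k))"
      using fb fnn wb[OF that] wnn[OF that] B0
      by (intro mult_left_mono mult_mono) auto
    also have "\<dots> = B * ((1 + real (absk k))^(Suc p) * c ^ absk k) * W k" by simp
    also have "\<dots> \<le> B * C * W k"
      using C[of "absk k"] B0 Wnn[of k] by (intro mult_right_mono mult_left_mono) auto
    finally show ?thesis .
  qed
  have tb: "f k * weight g y k \<le> B * C * W k" if "y \<in> S" for y k
  proof -
    have a: "0 \<le> f k * weight g y k" using fnn wnn[OF that] by simp
    have "1 * (f k * weight g y k) \<le> (1 + real (absk k)) * (f k * weight g y k)"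
      by (rule mult_right_mono) (use a in auto)
    then have "f k * weight g y k \<le> (1 + real (absk k)) * (f k * weight g y k)" by simp
    then show ?thesis using core[OF that, of k] by linarith
  qed
  have tnn: "f k * weight g y k \<ge> 0" if "y \<in> S" for y k
    using fnn wnn[OF that] by simp
  define Dm where "Dm m k y = real (k$m) * f k * weight g y k / y$m" for m k y
  have dnn: "Dm m k y \<ge> 0" if "y \<in> S" for y k m
    unfolding Dm_def
    by (intro divide_nonneg_pos mult_nonneg_nonneg) (use fnn wnn[OF that] ypos[OF that] in auto)
  have db: "Dm m k y \<le> (2 * B * C / x$m) * W k" if "y \<in> S" for y k m
  proof -
    have "real (k$m) * f k * weight g y k \<le> (1 + real (absk k)) * (f k * weight g y k)"
      using comp_le_absk[of k m] tnn[OF that]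
      by (simp add: mult.assoc mult_right_mono)
    also have "\<dots> \<le> B * C * W k" by (rule core[OF that])
    finally have 1: "real (k$m) * f k * weight g y k \<le> B * C * W k" .
    have "Dm m k y \<le> B * C * W k / y$m"
      unfolding Dm_def by (rule divide_right_mono[OF 1]) (use ypos[OF that, of m] in simp)
    also have "\<dots> \<le> B * C * W k / (x$m / 2)"
      using ylow[OF that, of m] xpos B0 Wnn[of k] C[of 0] ypos[OF that, of m]
      by (intro divide_left_mono) (auto intro!: mult_nonneg_nonneg)
    also have "\<dots> = (2 * B * C / x$m) * W k" by simp
    finally show ?thesis .
  qed
  have tsum: "(\<lambda>k. f k * weight g y k) summable_on UNIV" if "y \<in> S" for y
    by (rule summable_on_comparison_test[OF summable_on_cmult_right[OF Wsum, of "B*C"]])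
       (use tb[OF that] tnn[OF that] in auto)
  have dsum: "(\<lambda>k. Dm m k y) summable_on A" if "y \<in> S" for y m A
  proof -
    have "(\<lambda>k. Dm m k y) summable_on UNIV"
      by (rule summable_on_comparison_test[OF summable_on_cmult_right[OF Wsum, of "2 * B * C / x$m"]])
         (use db[OF that] dnn[OF that] in auto)
    then show ?thesis by (rule summable_on_subset_banach) auto
  qed
  show "(\<lambda>k. f k * weight g x k) summable_on UNIV" using tsum[OF xS] .
  define fN where "fN N y = (\<Sum>k\<in>bx N. f k * weight g y k)" for N y
  define fN' where "fN' N y h = (\<Sum>k\<in>bx N. \<Sum>m\<in>UNIV. h$m * Dm m k y)" for N y and h :: "real^'n"
  define g' where "g' y h = (\<Sum>m\<in>UNIV. h$m * infsum (\<lambda>k. Dm m k y) UNIV)" for y and h :: "real^'n"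
  have derf: "(fN N has_derivative fN' N y) (at y within S)" if "y \<in> S" for N y
    unfolding fN_def fN'_def[abs_def] Dm_def
    by (rule has_derivative_at_withinI, intro has_derivative_sum term_deriv) (use ypos[OF that] in auto)
  define Bs where "Bs = (\<Sum>m\<in>UNIV. 2 * B * C / x$m)"
  define tau where "tau N = infsum W UNIV - sum W (bx N)" for N
  have tau0: "tau \<longlonglongrightarrow> 0"
    using tendsto_diff[OF tendsto_const[of "infsum W UNIV"] bx_lim[OF Wsum]]
    unfolding tau_def[abs_def] by simp
  have taunn: "tau N \<ge> 0" for N
  proof -
    have "tau N = infsum W (UNIV - bx N)" unfolding tau_def using tail_eq[OF Wsum] by simp
    also have "\<dots> \<ge> 0" using Wnn by (intro infsum_nonneg) auto
    finally show ?thesis .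
  qed
  have nle: "\<forall>\<^sub>F N in sequentially. \<forall>y\<in>S. \<forall>h. norm (fN' N y h - g' y h) \<le> e * norm h"
    if e: "e > 0" for e
  proof -
    have "(\<lambda>N. Bs * tau N) \<longlonglongrightarrow> 0" using tendsto_mult_right_zero[OF tau0] by simp
    then have ev: "\<forall>\<^sub>F N in sequentially. Bs * tau N < e" using e by (simp add: order_tendstoD(2))
    show ?thesis using ev
    proof eventually_elim
      case (elim N)
      show ?case
      proof (intro ballI allI)
        fix y h assume yS: "y \<in> S"
        define tl where "tl m = infsum (\<lambda>k. Dm m k y) UNIV - (\<Sum>k\<in>bx N. Dm m k y)" for m
        have tleq: "tl m = infsum (\<lambda>k. Dm m k y) (UNIV - bx N)" for m
          unfolding tl_def using tail_eq[OF dsum[OF yS]] by simp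
        have tlnn: "tl m \<ge> 0" for m unfolding tleq using dnn[OF yS] by (intro infsum_nonneg) auto
        have tlb: "tl m \<le> (2 * B * C / x$m) * tau N" for m
        proof -
          have "tl m \<le> infsum (\<lambda>k. (2 * B * C / x$m) * W k) (UNIV - bx N)"
            unfolding tleq
            by (intro infsum_mono[OF dsum[OF yS]] summable_on_cmult_right
                  summable_on_subset_banach[OF Wsum] db[OF yS] subset_UNIV)
          also have "\<dots> = (2 * B * C / x$m) * tau N"
            by (subst infsum_cmult_right') (simp add: tau_def tail_eq[OF Wsum])
          finally show ?thesis .
        qed
        have "fN' N y h = (\<Sum>m\<in>UNIV. h$m * (\<Sum>k\<in>bx N. Dm m k y))"
          unfolding fN'_def by (subst sum.swap) (simp add: sum_distrib_left)
        then have "fN' N y h - g' y h = (\<Sum>m\<in>UNIV. h$m * (\<Sum>k\<in>bx N. Dm m k y) - h$m * infsum (\<lambda>k. Dm m k y) UNIV)"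
          by (simp add: g'_def sum_subtractf)
        also have "\<dots> = (\<Sum>m\<in>UNIV. - (h$m * tl m))"
          by (intro sum.cong refl) (simp add: tl_def algebra_simps)
        also have "\<dots> = - (\<Sum>m\<in>UNIV. h$m * tl m)" by (simp add: sum_negf)
        finally have "fN' N y h - g' y h = - (\<Sum>m\<in>UNIV. h$m * tl m)" .
        then have "norm (fN' N y h - g' y h) \<le> (\<Sum>m\<in>UNIV. \<bar>h$m * tl m\<bar>)"
          by (simp add: sum_abs)
        also have "\<dots> \<le> (\<Sum>m\<in>UNIV. norm h * ((2 * B * C / x$m) * tau N))"
        proof (intro sum_mono)
          fix m
          have "\<bar>h$m\<bar> \<le> norm h" by (rule component_le_norm_cart)
          then show "\<bar>h$m * tl m\<bar> \<le> norm h * ((2 * B * C / x$m) * tau N)"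
          proof -
            have "\<bar>h$m\<bar> * tl m \<le> norm h * tl m"
              by (rule mult_right_mono) (use tlnn[of m] \<open>\<bar>h$m\<bar> \<le> norm h\<close> in auto)
            also have "\<dots> \<le> norm h * ((2 * B * C / x$m) * tau N)"
              by (rule mult_left_mono[OF tlb]) simp
            finally show ?thesis using tlnn[of m] by (simp add: abs_mult)
          qed
        qed
        also have "\<dots> = norm h * (Bs * tau N)"
          by (simp add: Bs_def sum_distrib_left sum_distrib_right mult.assoc)
        also have "\<dots> \<le> e * norm h"
          using mult_left_mono[OF less_imp_le[OF elim], of "norm h"] by (simp add: mult.commute)
        finally show "norm (fN' N y h - g' y h) \<le> e * norm h" .
      qed
    qed
  qed
  have lim0: "(\<lambda>N. fN N x) \<longlonglongrightarrow> TT f g x"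
    unfolding fN_def TT_def by (rule bx_lim[OF tsum[OF xS]])
  obtain G where G: "\<And>y. y \<in> S \<Longrightarrow> (\<lambda>N. fN N y) \<longlonglongrightarrow> G y \<and> (G has_derivative g' y) (at y within S)"
    using has_derivative_sequence[OF convex_ball[of x d, folded S_def] derf nle xS lim0] by blast
  have GT: "G y = TT f g y" if "y \<in> S" for y
  proof -
    have "(\<lambda>N. fN N y) \<longlonglongrightarrow> TT f g y"
      unfolding fN_def TT_def by (rule bx_lim[OF tsum[OF that]])
    then show ?thesis using G[OF that] LIMSEQ_unique by blast
  qed
  have "(G has_derivative g' x) (at x)"
    using G[OF xS] at_within_open[OF xS] by (simp add: S_def)
  then have "(TT f g has_derivative g' x) (at x)"
    by (rule has_derivative_transform_within_open[OF _ open_ball xS[unfolded S_def]])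
       (use GT in \<open>auto simp: S_def\<close>)
  moreover have "g' x = (\<lambda>h. \<Sum>m\<in>UNIV. h$m * (TT (\<lambda>k. real (k$m) * f k) g x / x$m))"
    unfolding g'_def Dm_def TT_def by (simp add: infsum_divide_const mult.assoc)
  ultimately show "(TT f g has_derivative (\<lambda>h. \<Sum>m\<in>UNIV. h$m * (TT (\<lambda>k. real (k$m) * f k) g x / x$m))) (at x)"
    by simp
qed

end

lemma infsum_finsum_aux:
  fixes f :: "'i \<Rightarrow> 'a \<Rightarrow> real"
  assumes "finite I"
  shows "(\<forall>i\<in>I. f i summable_on A) \<longrightarrow> infsum (\<lambda>x. \<Sum>i\<in>I. f i x) A = (\<Sum>i\<in>I. infsum (f i) A)
          \<and> (\<lambda>x. \<Sum>i\<in>I. f i x) summable_on A"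
  using assms
proof (induction I rule: finite_induct)
  case empty
  then show ?case by simp
next
  case (insert j I)
  show ?case
  proof
    assume a: "\<forall>i\<in>insert j I. f i summable_on A"
    then have IH: "infsum (\<lambda>x. \<Sum>i\<in>I. f i x) A = (\<Sum>i\<in>I. infsum (f i) A)"
        "(\<lambda>x. \<Sum>i\<in>I. f i x) summable_on A" using insert by auto
    have fj: "f j summable_on A" using a by auto
    have "infsum (\<lambda>x. \<Sum>i\<in>insert j I. f i x) A = infsum (\<lambda>x. f j x + (\<Sum>i\<in>I. f i x)) A"
      using insert by simp
    also have "\<dots> = infsum (f j) A + infsum (\<lambda>x. \<Sum>i\<in>I. f i x) A"
      using fj IH(2) by (rule infsum_add)
    finally have 1: "infsum (\<lambda>x. \<Sum>i\<in>insert j I. f i x) A = (\<Sum>i\<in>insert j I. infsum (f i) A)"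
      using insert IH(1) by simp
    have "(\<lambda>x. f j x + (\<Sum>i\<in>I. f i x)) summable_on A"
      using fj IH(2) by (rule summable_on_add)
    then have 2: "(\<lambda>x. \<Sum>i\<in>insert j I. f i x) summable_on A" using insert by simp
    show "infsum (\<lambda>x. \<Sum>i\<in>insert j I. f i x) A = (\<Sum>i\<in>insert j I. infsum (f i) A)
          \<and> (\<lambda>x. \<Sum>i\<in>insert j I. f i x) summable_on A" using 1 2 by blast
  qed
qed

lemma infsum_finsum:
  fixes f :: "'i \<Rightarrow> 'a \<Rightarrow> real"
  assumes "finite I" "\<And>i. i \<in> I \<Longrightarrow> f i summable_on A"
  shows "infsum (\<lambda>x. \<Sum>i\<in>I. f i x) A = (\<Sum>i\<in>I. infsum (f i) A)"
    and "(\<lambda>x. \<Sum>i\<in>I. f i x) summable_on A"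
  using infsum_finsum_aux[OF assms(1), of f A] assms(2) by auto

lemma infsum_ge_term:
  fixes f :: "'a \<Rightarrow> real"
  assumes "f summable_on UNIV" "\<And>x. f x \<ge> 0"
  shows "f a \<le> infsum f UNIV"
proof -
  have "infsum f {a} \<le> infsum f UNIV"
    using assms by (intro infsum_mono_neutral) auto
  then show ?thesis by simp
qed

context
  fixes g :: "'n::finite \<Rightarrow> nat^'n \<Rightarrow> real"
  assumes nonneg: "\<forall>i k. g i k \<ge> 0" and ND: "cond_ND g"
begin

abbreviation "U \<equiv> interior (fug_dom g)"

lemma poly_summable:
  assumes xU: "x \<in> U" and fb: "\<forall>k. \<bar>f k\<bar> \<le> B * (1 + real (absk k))^p"
  shows "(\<lambda>k. f k * weight g x k) summable_on UNIV"
proof -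
  have a: "\<forall>k. 0 \<le> \<bar>f k\<bar>" by simp
  have s: "(\<lambda>k. \<bar>f k\<bar> * weight g x k) summable_on UNIV"
    by (rule TT_deriv(1)[OF nonneg ND xU a fb])
  have w: "weight g x k \<ge> 0" for k
    using U_char1[OF xU] by (intro weight_nonneg[OF nonneg ND]) (auto simp: less_imp_le)
  show ?thesis
    by (rule Infinite_Sum.abs_summable_summable, rule Infinite_Sum.abs_summable_on_comparison_test'[OF s]) (simp add: abs_mult w)
qed

definition "Z x = TT (\<lambda>k. 1) g x"
definition "S1 i x = TT (\<lambda>k. real (k$i)) g x"
definition "S2 i j x = TT (\<lambda>k. real (k$i) * real (k$j)) g x"
definition "S3 i j l x = TT (\<lambda>k. real (k$i) * real (k$j) * real (k$l)) g x"

lemma S2_sym: "S2 i j x = S2 j i x"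
  unfolding S2_def by (simp add: mult.commute)

lemma S3_sym: "S3 i j l x = S3 j i l x" "S3 i j l x = S3 i l j x"
  unfolding S3_def by (simp_all add: ac_simps)

lemma bnd1: "real (k$i) \<le> 1 * (1 + real (absk k))^1"
  using comp_le_absk[of k i] by simp

lemma bnd0: "(1::real) \<le> 1 * (1 + real (absk k))^0" by simp

lemma bnd2: "real (k$i) * real (k$j) \<le> 1 * (1 + real (absk k))^2"
proof -
  have "real (k$i) * real (k$j) \<le> (1 + real (absk k)) * (1 + real (absk k))"
    using bnd1[of k i] bnd1[of k j] by (intro mult_mono) auto
  then show ?thesis by (simp add: power2_eq_square)
qed

lemma dZ: "x \<in> U \<Longrightarrow> (Z has_derivative (\<lambda>h. \<Sum>m\<in>UNIV. h$m * (S1 m x / x$m))) (at x)"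
proof -
  assume xU: "x \<in> U"
  have a: "\<forall>k::nat^'n. (0::real) \<le> 1" by simp
  have b: "\<forall>k::nat^'n. (1::real) \<le> 1 * (1 + real (absk k))^0" by simp
  show ?thesis using TT_deriv(2)[OF nonneg ND xU a b] by (simp add: Z_def[abs_def] S1_def)
qed

lemma dS1: "x \<in> U \<Longrightarrow> (S1 i has_derivative (\<lambda>h. \<Sum>m\<in>UNIV. h$m * (S2 m i x / x$m))) (at x)"
proof -
  assume xU: "x \<in> U"
  have a: "\<forall>k::nat^'n. (0::real) \<le> real (k$i)" by simp
  have b: "\<forall>k::nat^'n. real (k$i) \<le> 1 * (1 + real (absk k))^1" using bnd1 by blast
  show ?thesis using TT_deriv(2)[OF nonneg ND xU a b] by (simp add: S1_def[abs_def] S2_def)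
qed

lemma dS2: "x \<in> U \<Longrightarrow> (S2 i j has_derivative (\<lambda>h. \<Sum>m\<in>UNIV. h$m * (S3 m i j x / x$m))) (at x)"
proof -
  assume xU: "x \<in> U"
  have a: "\<forall>k::nat^'n. (0::real) \<le> real (k$i) * real (k$j)" by simp
  have b: "\<forall>k::nat^'n. real (k$i) * real (k$j) \<le> 1 * (1 + real (absk k))^2" using bnd2 by blast
  show ?thesis using TT_deriv(2)[OF nonneg ND xU a b] by (simp add: S2_def[abs_def] S3_def mult.assoc)
qed

lemma wsum: "x \<in> U \<Longrightarrow> weight g x summable_on UNIV"
proof -
  assume xU: "x \<in> U"
  have "\<forall>k::nat^'n. \<bar>1::real\<bar> \<le> 1 * (1 + real (absk k))^0" by simp
  from poly_summable[OF xU this] show ?thesis by simp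
qed

lemma w_pos: "x \<in> U \<Longrightarrow> weight g x k > 0"
  using U_char1 by (intro weight_pos[OF nonneg ND]) auto

lemma Z_pos: "x \<in> U \<Longrightarrow> Z x > 0"
proof -
  assume xU: "x \<in> U"
  have "weight g x 0 \<le> infsum (weight g x) UNIV"
    by (rule infsum_ge_term[OF wsum[OF xU]]) (use w_pos[OF xU] in \<open>auto simp: less_imp_le\<close>)
  then show ?thesis using w_pos[OF xU, of 0] by (simp add: Z_def TT_def)
qed

lemma mean_eq: "mean g x = (\<chi> i. S1 i x / Z x)"
  unfolding mean_def S1_def Z_def TT_def Zpart_def by simp

definition "Cv i j x = S2 i j x / Z x - S1 i x * S1 j x / (Z x * Z x)"

lemma Cv_sym: "Cv i j x = Cv j i x"
  unfolding Cv_def by (simp add: S2_sym mult.commute)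

definition "DM x h = (\<chi> i. \<Sum>m\<in>UNIV. h$m * (Cv i m x / x$m))"

lemma dmean: "x \<in> U \<Longrightarrow> (mean g has_derivative DM x) (at x)"
proof -
  assume xU: "x \<in> U"
  have Z0: "Z x \<noteq> 0" using Z_pos[OF xU] by simp
  have "((\<lambda>y. S1 i y / Z y) has_derivative (\<lambda>h. DM x h $ i)) (at x)" for i
  proof -
    have "((\<lambda>y. S1 i y / Z y) has_derivative
       (\<lambda>h. ((\<Sum>m\<in>UNIV. h$m * (S2 m i x / x$m)) * Z x - S1 i x * (\<Sum>m\<in>UNIV. h$m * (S1 m x / x$m))) / (Z x * Z x))) (at x)"
      by (rule has_derivative_divide'[OF dS1[OF xU] dZ[OF xU] Z0])
    moreover have "((\<Sum>m\<in>UNIV. h$m * (S2 m i x / x$m)) * Z x - S1 i x * (\<Sum>m\<in>UNIV. h$m * (S1 m x / x$m))) / (Z x * Z x)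
        = DM x h $ i" for h
    proof -
      define A where "A = (\<Sum>m\<in>UNIV. h$m * (S2 m i x / x$m))"
      define Bb where "Bb = (\<Sum>m\<in>UNIV. h$m * (S1 m x / x$m))"
      have "(A * Z x - S1 i x * Bb) / (Z x * Z x) = A / Z x - S1 i x * Bb / (Z x * Z x)"
        using Z0 by (simp add: diff_divide_distrib)
      also have "A / Z x = (\<Sum>m\<in>UNIV. h$m * (S2 m i x / x$m) / Z x)"
        unfolding A_def by (rule sum_divide_distrib)
      also have "S1 i x * Bb / (Z x * Z x) = (\<Sum>m\<in>UNIV. S1 i x * (h$m * (S1 m x / x$m)) / (Z x * Z x))"
        unfolding Bb_def by (simp only: sum_distrib_left sum_divide_distrib)
      also have "(\<Sum>m\<in>UNIV. h$m * (S2 m i x / x$m) / Z x) - (\<Sum>m\<in>UNIV. S1 i x * (h$m * (S1 m x / x$m)) / (Z x * Z x))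
          = (\<Sum>m\<in>UNIV. h$m * (S2 m i x / x$m) / Z x - S1 i x * (h$m * (S1 m x / x$m)) / (Z x * Z x))"
        by (rule sum_subtractf[symmetric])
      also have "\<dots> = (\<Sum>m\<in>UNIV. h$m * (Cv i m x / x$m))"
      proof (intro sum.cong refl)
        fix m
        show "h$m * (S2 m i x / x$m) / Z x - S1 i x * (h$m * (S1 m x / x$m)) / (Z x * Z x) = h$m * (Cv i m x / x$m)"
        proof -
          have xm: "x$m \<noteq> 0" using U_char1[OF xU] by (metis less_irrefl)
          show ?thesis using Z0 xm by (simp add: Cv_def S2_sym[of m i] field_simps)
        qed
      qed
      finally show ?thesis by (simp add: DM_def A_def Bb_def)
    qed
    ultimately show ?thesis by simp
  qed
  then have "((\<lambda>y. \<chi> i. S1 i y / Z y) has_derivative DM x) (at x)"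
    by (intro has_derivative_vecI) simp
  then show ?thesis by (simp add: mean_eq[abs_def])
qed

end

lemma sum_axis: "(\<Sum>m\<in>UNIV. axis j (1::real) $ m * F m) = F (j::'n::finite)"
proof -
  have "(\<Sum>m\<in>UNIV. axis j (1::real) $ m * F m) = (\<Sum>m\<in>UNIV. if m = j then F m else 0)"
    by (intro sum.cong) (auto simp: axis_def)
  then show ?thesis by simp
qed

definition Ncol :: "('n::finite \<Rightarrow> nat^'n \<Rightarrow> real) \<Rightarrow> 'n \<Rightarrow> real^'n \<Rightarrow> real^'n" where
  "Ncol g l x = (\<chi> i. Cv g i l x / x$l)"

definition kap :: "('n::finite \<Rightarrow> nat^'n \<Rightarrow> real) \<Rightarrow> 'n \<Rightarrow> 'n \<Rightarrow> 'n \<Rightarrow> real^'n \<Rightarrow> real" where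
  "kap g i j l x = S3 g j i l x / Z g x
     - (S2 g i l x * S1 g j x + S2 g j i x * S1 g l x + S1 g i x * S2 g j l x) / (Z g x * Z g x)
     + 2 * (S1 g i x * S1 g l x * S1 g j x) / (Z g x * Z g x * Z g x)"

lemma vpow_exp:
  fixes y :: "real^'n::finite"
  assumes "\<forall>i. y$i > 0"
  shows "vpow y k = exp (\<Sum>i\<in>UNIV. real (k$i) * ln (y$i))"
proof -
  have "vpow y k = (\<Prod>i\<in>UNIV. exp (real (k$i) * ln (y$i)))"
    unfolding vpow_def
  proof (intro prod.cong refl)
    fix i
    have "exp (real (k$i) * ln (y$i)) = exp (ln (y$i)) ^ (k$i)" by (rule exp_of_nat_mult)
    also have "\<dots> = (y$i) ^ (k$i)" using assms by simp
    finally show "(y$i) ^ (k$i) = exp (real (k$i) * ln (y$i))" by simp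
  qed
  also have "\<dots> = exp (\<Sum>i\<in>UNIV. real (k$i) * ln (y$i))" by (simp add: exp_sum)
  finally show ?thesis .
qed

context
  fixes g :: "'n::finite \<Rightarrow> nat^'n \<Rightarrow> real"
  assumes nonneg: "\<forall>i k. g i k \<ge> 0" and ND: "cond_ND g"
begin

lemma Q_pos:
  assumes xU: "x \<in> U g" and v: "v \<noteq> 0"
  shows "(\<Sum>i\<in>UNIV. \<Sum>l\<in>UNIV. v$i * v$l * Cv g i l x) > 0"
proof -
  define p where "p k = weight g x k" for k
  define L where "L k = (\<Sum>i\<in>UNIV. v$i * real (k$i))" for k :: "nat^'n"
  define V where "V = (\<Sum>i\<in>UNIV. \<bar>v$i\<bar>)"
  have Lb: "\<bar>L k\<bar> \<le> V * (1 + real (absk k))^1" for k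
  proof -
    have "\<bar>L k\<bar> \<le> (\<Sum>i\<in>UNIV. \<bar>v$i * real (k$i)\<bar>)" unfolding L_def by (rule sum_abs)
    also have "\<dots> \<le> (\<Sum>i\<in>UNIV. \<bar>v$i\<bar> * (1 + real (absk k)))"
    proof (intro sum_mono)
      fix i
      have "real (k$i) \<le> 1 + real (absk k)" using comp_le_absk[of k i] by simp
      then show "\<bar>v$i * real (k$i)\<bar> \<le> \<bar>v$i\<bar> * (1 + real (absk k))"
        by (simp add: abs_mult mult_left_mono)
    qed
    also have "\<dots> = V * (1 + real (absk k))^1" by (simp add: V_def sum_distrib_right)
    finally show ?thesis .
  qed
  have V0: "V \<ge> 0" unfolding V_def by (intro sum_nonneg) auto
  have L2b: "\<bar>L k * L k\<bar> \<le> (V * V) * (1 + real (absk k))^2" for k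
  proof -
    have "\<bar>L k * L k\<bar> \<le> (V * (1 + real (absk k))) * (V * (1 + real (absk k)))"
      unfolding abs_mult using Lb[of k] by (intro mult_mono) auto
    then show ?thesis by (simp add: power2_eq_square ac_simps)
  qed
  have sp: "p summable_on UNIV" unfolding p_def[abs_def] by (rule wsum[OF nonneg ND xU])
  have s1: "(\<lambda>k. real (k$i) * p k) summable_on UNIV" for i
  proof -
    have "\<forall>k::nat^'n. \<bar>real (k$i)\<bar> \<le> 1 * (1 + real (absk k))^1"
    proof
      fix k :: "nat^'n" show "\<bar>real (k$i)\<bar> \<le> 1 * (1 + real (absk k))^1"
        using bnd1[OF nonneg ND, of k i] by simp
    qed
    from poly_summable[OF nonneg ND xU this] show ?thesis by (simp add: p_def)
  qed
  have s2: "(\<lambda>k. real (k$i) * real (k$l) * p k) summable_on UNIV" for i l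
  proof -
    have "\<forall>k::nat^'n. \<bar>real (k$i) * real (k$l)\<bar> \<le> 1 * (1 + real (absk k))^2"
    proof
      fix k :: "nat^'n" show "\<bar>real (k$i) * real (k$l)\<bar> \<le> 1 * (1 + real (absk k))^2"
        using bnd2[OF nonneg ND, of k i l] by simp
    qed
    from poly_summable[OF nonneg ND xU this] show ?thesis by (simp add: p_def)
  qed
  have sL: "(\<lambda>k. L k * p k) summable_on UNIV"
    using poly_summable[OF nonneg ND xU, of L V 1] Lb by (simp add: p_def[abs_def])
  have sLL: "(\<lambda>k. L k * L k * p k) summable_on UNIV"
    using poly_summable[OF nonneg ND xU, of "\<lambda>k. L k * L k" "V*V" 2] L2b by (simp add: p_def[abs_def])
  have Zp: "Z g x = infsum p UNIV" by (simp add: Z_def[OF nonneg ND] TT_def p_def[abs_def])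
  have Zpos: "Z g x > 0" by (rule Z_pos[OF nonneg ND xU])
  have S1p: "S1 g i x = infsum (\<lambda>k. real (k$i) * p k) UNIV" for i by (simp add: S1_def[OF nonneg ND] TT_def p_def)
  have S2p: "S2 g i l x = infsum (\<lambda>k. real (k$i) * real (k$l) * p k) UNIV" for i l
    by (simp add: S2_def[OF nonneg ND] TT_def p_def)
  have A1: "infsum (\<lambda>k. L k * p k) UNIV = (\<Sum>i\<in>UNIV. v$i * S1 g i x)"
  proof -
    have "(\<lambda>k. L k * p k) = (\<lambda>k. \<Sum>i\<in>UNIV. v$i * (real (k$i) * p k))"
      by (simp add: L_def sum_distrib_right mult.assoc)
    then have "infsum (\<lambda>k. L k * p k) UNIV = (\<Sum>i\<in>UNIV. infsum (\<lambda>k. v$i * (real (k$i) * p k)) UNIV)"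
      using infsum_finsum(1)[of UNIV "\<lambda>i k. v$i * (real (k$i) * p k)" UNIV]
      by (simp add: summable_on_cmult_right[OF s1])
    also have "\<dots> = (\<Sum>i\<in>UNIV. v$i * S1 g i x)"
      by (simp add: infsum_cmult_right' S1p)
    finally show ?thesis .
  qed
  have A2: "infsum (\<lambda>k. L k * L k * p k) UNIV = (\<Sum>i\<in>UNIV. \<Sum>l\<in>UNIV. v$i * v$l * S2 g i l x)"
  proof -
    define G where "G i l k = v$i * v$l * (real (k$i) * real (k$l) * p k)" for i l k
    have Gs: "G i l summable_on UNIV" for i l unfolding G_def[abs_def]
      by (rule summable_on_cmult_right[OF s2])
    have Fs: "(\<lambda>k. \<Sum>l\<in>UNIV. G i l k) summable_on UNIV" for i
      by (rule infsum_finsum(2)) (use Gs in auto)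
    have "(\<lambda>k. L k * L k * p k) = (\<lambda>k. \<Sum>i\<in>UNIV. \<Sum>l\<in>UNIV. G i l k)"
      by (simp add: L_def G_def sum_distrib_right sum_distrib_left sum_product ac_simps)
    then have "infsum (\<lambda>k. L k * L k * p k) UNIV = (\<Sum>i\<in>UNIV. infsum (\<lambda>k. \<Sum>l\<in>UNIV. G i l k) UNIV)"
      using infsum_finsum(1)[of UNIV "\<lambda>i k. \<Sum>l\<in>UNIV. G i l k" UNIV] Fs by simp
    also have "\<dots> = (\<Sum>i\<in>UNIV. \<Sum>l\<in>UNIV. infsum (G i l) UNIV)"
      using infsum_finsum(1)[of UNIV "G i" UNIV for i] Gs by simp
    also have "\<dots> = (\<Sum>i\<in>UNIV. \<Sum>l\<in>UNIV. v$i * v$l * S2 g i l x)"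
      by (simp add: G_def[abs_def] infsum_cmult_right' S2p)
    finally show ?thesis .
  qed
  define ILL where "ILL = infsum (\<lambda>k. L k * L k * p k) UNIV"
  define \<mu> where "\<mu> = (\<Sum>i\<in>UNIV. v$i * S1 g i x) / Z g x"
  have ILp: "infsum (\<lambda>k. L k * p k) UNIV = \<mu> * Z g x" using A1 Zpos by (simp add: \<mu>_def)
  have eqf: "(\<lambda>k. (L k - \<mu>)^2 * p k) = (\<lambda>k. L k * L k * p k + ((-2*\<mu>) * (L k * p k) + (\<mu>*\<mu>) * p k))"
    by (simp add: power2_eq_square algebra_simps)
  have sa: "(\<lambda>k. (-2*\<mu>) * (L k * p k) + (\<mu>*\<mu>) * p k) summable_on UNIV"
    by (intro summable_on_add summable_on_cmult_right sL sp)
  have ssq: "(\<lambda>k. (L k - \<mu>)^2 * p k) summable_on UNIV"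
    unfolding eqf by (intro summable_on_add sLL sa)
  have A3: "infsum (\<lambda>k. (L k - \<mu>)^2 * p k) UNIV = ILL - \<mu> * \<mu> * Z g x"
  proof -
    have "infsum (\<lambda>k. (L k - \<mu>)^2 * p k) UNIV
        = ILL + (infsum (\<lambda>k. (-2*\<mu>) * (L k * p k)) UNIV + infsum (\<lambda>k. (\<mu>*\<mu>) * p k) UNIV)"
    proof -
      have sb1: "(\<lambda>k. (-2*\<mu>) * (L k * p k)) summable_on UNIV" by (rule summable_on_cmult_right[OF sL])
      have sb2: "(\<lambda>k. (\<mu>*\<mu>) * p k) summable_on UNIV" by (rule summable_on_cmult_right[OF sp])
      show ?thesis unfolding eqf ILL_def by (simp only: infsum_add[OF sLL sa] infsum_add[OF sb1 sb2])
    qed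
    also have "\<dots> = ILL + ((-2*\<mu>) * (\<mu> * Z g x) + (\<mu>*\<mu>) * Z g x)"
      by (simp only: infsum_cmult_right' ILp Zp[symmetric])
    finally show ?thesis by (simp add: algebra_simps)
  qed
  have pp: "p k > 0" for k unfolding p_def by (rule w_pos[OF nonneg ND xU])
  have A4: "infsum (\<lambda>k. (L k - \<mu>)^2 * p k) UNIV > 0"
  proof -
    have tm: "\<exists>k0. (L k0 - \<mu>)^2 * p k0 > 0"
    proof (cases "\<mu> = 0")
      case False
      have "L 0 = 0" by (simp add: L_def)
      then show ?thesis using False pp[of 0] by (intro exI[of _ 0]) simp
    next
      case True
      obtain i where vi: "v$i \<noteq> 0" using v by (metis vec_eq_iff zero_index)
      have "L (axis i 1) = v$i"
      proof -
        have "L (axis i 1) = (\<Sum>j\<in>UNIV. if j = i then v$j else 0)"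
          unfolding L_def by (intro sum.cong) (auto simp: axis_def)
        then show ?thesis by simp
      qed
      then show ?thesis using True vi pp[of "axis i 1"] by (intro exI[of _ "axis i 1"]) simp
    qed
    then obtain k0 where k0: "(L k0 - \<mu>)^2 * p k0 > 0" by blast
    have "(L k0 - \<mu>)^2 * p k0 \<le> infsum (\<lambda>k. (L k - \<mu>)^2 * p k) UNIV"
      by (rule infsum_ge_term[OF ssq]) (use pp in \<open>simp add: less_imp_le\<close>)
    then show ?thesis using k0 by linarith
  qed
  have Qeq: "(\<Sum>i\<in>UNIV. \<Sum>l\<in>UNIV. v$i * v$l * Cv g i l x) = ILL / Z g x - \<mu> * \<mu>"
  proof -
    have "(\<Sum>i\<in>UNIV. \<Sum>l\<in>UNIV. v$i * v$l * Cv g i l x)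
        = (\<Sum>i\<in>UNIV. \<Sum>l\<in>UNIV. v$i * v$l * S2 g i l x / Z g x - (v$i * S1 g i x) * (v$l * S1 g l x) / (Z g x * Z g x))"
      by (intro sum.cong refl) (simp add: Cv_def[OF nonneg ND] algebra_simps)
    also have "\<dots> = (\<Sum>i\<in>UNIV. \<Sum>l\<in>UNIV. v$i * v$l * S2 g i l x / Z g x)
          - (\<Sum>i\<in>UNIV. \<Sum>l\<in>UNIV. (v$i * S1 g i x) * (v$l * S1 g l x) / (Z g x * Z g x))"
      by (simp add: sum_subtractf)
    also have "(\<Sum>i\<in>UNIV. \<Sum>l\<in>UNIV. v$i * v$l * S2 g i l x / Z g x) = ILL / Z g x"
      unfolding ILL_def A2 by (simp add: sum_divide_distrib)
    also have "(\<Sum>i\<in>UNIV. \<Sum>l\<in>UNIV. (v$i * S1 g i x) * (v$l * S1 g l x) / (Z g x * Z g x))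
        = (\<Sum>i\<in>UNIV. v$i * S1 g i x) * (\<Sum>l\<in>UNIV. v$l * S1 g l x) / (Z g x * Z g x)"
      by (simp add: sum_divide_distrib sum_product)
    also have "\<dots> = \<mu> * \<mu>" by (simp add: \<mu>_def)
    finally show ?thesis .
  qed
  have "ILL / Z g x - \<mu> * \<mu> = (ILL - \<mu> * \<mu> * Z g x) / Z g x"
    using Zpos by (simp add: field_simps)
  also have "\<dots> > 0" using A3 A4 Zpos by simp
  finally show ?thesis using Qeq by simp
qed

lemma dCv:
  assumes xU: "x \<in> U g"
  shows "\<exists>D. (Cv g i l has_derivative D) (at x) \<and> (\<forall>j. D (axis j 1) = kap g i j l x / x$j)"
proof -
  have Z0: "Z g x \<noteq> 0" using Z_pos[OF nonneg ND xU] by simp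
  have ZZ0: "Z g x * Z g x \<noteq> 0" using Z0 by simp
  have xj: "x$j \<noteq> 0" for j using U_char1[OF xU] by (metis less_irrefl)
  have cv: "Cv g i l = (\<lambda>y. S2 g i l y / Z g y - S1 g i y * S1 g l y / (Z g y * Z g y))"
    by (rule ext) (simp add: Cv_def[OF nonneg ND])
  note d = has_derivative_diff[OF has_derivative_divide'[OF dS2[OF nonneg ND xU] dZ[OF nonneg ND xU] Z0]
        has_derivative_divide'[OF has_derivative_mult[OF dS1[OF nonneg ND xU] dS1[OF nonneg ND xU]]
           has_derivative_mult[OF dZ[OF nonneg ND xU] dZ[OF nonneg ND xU]] ZZ0]]
  show ?thesis
    unfolding cv
    apply (rule exI, rule conjI, rule d)
    apply (intro allI)
    apply (simp only: sum_axis)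
    apply (simp add: kap_def)
    using Z0 xj by (simp add: field_simps)
qed

lemma dNcol:
  assumes xU: "x \<in> U g"
  shows "\<exists>N'. (Ncol g l has_derivative N') (at x) \<and>
     (\<forall>i j. N' (axis j 1) $ i = (kap g i j l x / x$j * x$l - Cv g i l x * (axis j 1 $ l)) / (x$l * x$l))"
proof -
  have xl: "x$l \<noteq> 0" using U_char1[OF xU] by (metis less_irrefl)
  have "\<forall>i. \<exists>D. (Cv g i l has_derivative D) (at x) \<and> (\<forall>j. D (axis j 1) = kap g i j l x / x$j)"
    using dCv[OF xU] by blast
  then obtain D where D: "\<And>i. (Cv g i l has_derivative D i) (at x)"
      "\<And>i j. D i (axis j 1) = kap g i j l x / x$j"
    by metis
  define N' where "N' h = (\<chi> i. (D i h * x$l - Cv g i l x * h$l) / (x$l * x$l))" for h :: "real^'n"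
  have "(Ncol g l has_derivative N') (at x)"
    unfolding Ncol_def
  proof (rule has_derivative_vecI)
    fix i
    show "((\<lambda>y. (\<chi> i. Cv g i l y / y$l) $ i) has_derivative (\<lambda>h. N' h $ i)) (at x)"
      using has_derivative_divide'[OF D(1)[of i] vec_nth_has_derivative[of l] xl]
      by (simp add: N'_def)
  qed
  moreover have "\<forall>i j. N' (axis j 1) $ i = (kap g i j l x / x$j * x$l - Cv g i l x * (axis j 1 $ l)) / (x$l * x$l)"
    by (simp add: N'_def D(2))
  ultimately show ?thesis by blast
qed

lemma DM_scale: "DM g x (s *\<^sub>R h) = s *\<^sub>R DM g x h"
  by (simp add: DM_def[OF nonneg ND] vec_eq_iff sum_distrib_left algebra_simps)

lemma DM_Ncol: "DM g x h = (\<Sum>l\<in>UNIV. h$l *\<^sub>R Ncol g l x)"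
  by (simp add: DM_def[OF nonneg ND] Ncol_def vec_eq_iff sum_component algebra_simps)

lemma linear_DM: "x \<in> U g \<Longrightarrow> linear (DM g x)"
  using dmean[OF nonneg ND] has_derivative_linear by blast

end

definition gpath :: "real^'n::finite \<Rightarrow> real^'n \<Rightarrow> real \<Rightarrow> real^'n" where
  "gpath \<phi> \<psi> t = (\<chi> i. exp (ln (\<phi>$i) + t * (ln (\<psi>$i) - ln (\<phi>$i))))"

lemma gpath_pos: "gpath \<phi> \<psi> t $ i > 0"
  by (simp add: gpath_def)

lemma gpath_0: "\<forall>i. \<phi>$i > 0 \<Longrightarrow> gpath \<phi> \<psi> 0 = \<phi>"
  by (simp add: gpath_def vec_eq_iff)

lemma gpath_1: "\<forall>i. \<psi>$i > 0 \<Longrightarrow> gpath \<phi> \<psi> 1 = \<psi>"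
  by (simp add: gpath_def vec_eq_iff)

lemma gpath_deriv:
  "(gpath \<phi> \<psi> has_derivative (\<lambda>s. s *\<^sub>R (\<chi> i. gpath \<phi> \<psi> t $ i * (ln (\<psi>$i) - ln (\<phi>$i))))) (at t)"
proof (rule has_derivative_vecI)
  fix i
  define a where "a = ln (\<phi>$i)"
  define d where "d = ln (\<psi>$i) - ln (\<phi>$i)"
  have "((\<lambda>t. exp (a + t * d)) has_field_derivative exp (a + t * d) * d) (at t)"
    by (auto intro!: derivative_eq_intros)
  then have "((\<lambda>t. exp (a + t * d)) has_derivative (*) (exp (a + t * d) * d)) (at t)"
    by (simp add: has_field_derivative_def)
  moreover have "(*) (exp (a + t * d) * d) = (\<lambda>s. s * (exp (a + t * d) * d))"
    by (simp add: fun_eq_iff mult.commute)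
  ultimately have "((\<lambda>t. exp (a + t * d)) has_derivative (\<lambda>s. s * (exp (a + t * d) * d))) (at t)"
    by simp
  then show "((\<lambda>t. gpath \<phi> \<psi> t $ i) has_derivative
      (\<lambda>s. (s *\<^sub>R (\<chi> i. gpath \<phi> \<psi> t $ i * (ln (\<psi>$i) - ln (\<phi>$i)))) $ i)) (at t)"
    by (simp add: gpath_def a_def d_def)
qed

context
  fixes g :: "'n::finite \<Rightarrow> nat^'n \<Rightarrow> real"
  assumes nonneg: "\<forall>i k. g i k \<ge> 0" and ND: "cond_ND g"
begin

lemma gpath_in_U:
  assumes \<phi>U: "\<phi> \<in> U g" and \<psi>U: "\<psi> \<in> U g" and t: "0 \<le> t" "t \<le> 1"
  shows "gpath \<phi> \<psi> t \<in> U g"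
proof -
  obtain r1 where r1: "r1 > 1" "r1 *\<^sub>R \<phi> \<in> fug_dom g" and \<phi>pos: "\<forall>i. \<phi>$i > 0"
    using U_char1[OF \<phi>U] by blast
  obtain r2 where r2: "r2 > 1" "r2 *\<^sub>R \<psi> \<in> fug_dom g" and \<psi>pos: "\<forall>i. \<psi>$i > 0"
    using U_char1[OF \<psi>U] by blast
  define r where "r = min r1 r2"
  have r: "r > 1" "r \<le> r1" "r \<le> r2" using r1 r2 by (auto simp: r_def)
  have "\<forall>i. 0 \<le> (r *\<^sub>R \<phi>)$i \<and> (r *\<^sub>R \<phi>)$i \<le> (r1 *\<^sub>R \<phi>)$i"
    using r \<phi>pos by (simp add: mult_right_mono less_imp_le)
  then have r\<phi>: "r *\<^sub>R \<phi> \<in> fug_dom g" by (rule fug_dom_down[OF nonneg ND r1(2)])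
  have "\<forall>i. 0 \<le> (r *\<^sub>R \<psi>)$i \<and> (r *\<^sub>R \<psi>)$i \<le> (r2 *\<^sub>R \<psi>)$i"
    using r \<psi>pos by (simp add: mult_right_mono less_imp_le)
  then have r\<psi>: "r *\<^sub>R \<psi> \<in> fug_dom g" by (rule fug_dom_down[OF nonneg ND r2(2)])
  define y where "y = r *\<^sub>R gpath \<phi> \<psi> t"
  have ypos: "\<forall>i. y$i > 0" using r by (simp add: y_def gpath_pos)
  have key: "weight g y k \<le> (1-t) * weight g (r *\<^sub>R \<phi>) k + t * weight g (r *\<^sub>R \<psi>) k" for k
  proof -
    define a where "a = (\<Sum>i\<in>UNIV. real (k$i) * ln ((r *\<^sub>R \<phi>)$i))"
    define b where "b = (\<Sum>i\<in>UNIV. real (k$i) * ln ((r *\<^sub>R \<psi>)$i))"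
    have lny: "ln (y$i) = (1-t) * ln ((r *\<^sub>R \<phi>)$i) + t * ln ((r *\<^sub>R \<psi>)$i)" for i
    proof -
      have "ln (y$i) = ln r + (ln (\<phi>$i) + t * (ln (\<psi>$i) - ln (\<phi>$i)))"
        using r by (simp add: y_def gpath_def ln_mult)
      also have "\<dots> = (1-t) * (ln r + ln (\<phi>$i)) + t * (ln r + ln (\<psi>$i))" by (simp add: algebra_simps)
      also have "\<dots> = (1-t) * ln ((r *\<^sub>R \<phi>)$i) + t * ln ((r *\<^sub>R \<psi>)$i)"
        using r \<phi>pos[rule_format, of i] \<psi>pos[rule_format, of i] by (simp add: ln_mult)
      finally show ?thesis .
    qed
    have "(\<Sum>i\<in>UNIV. real (k$i) * ln (y$i))
        = (\<Sum>i\<in>UNIV. (1-t) * (real (k$i) * ln ((r *\<^sub>R \<phi>)$i)) + t * (real (k$i) * ln ((r *\<^sub>R \<psi>)$i)))"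
      by (intro sum.cong refl) (simp only: lny algebra_simps)
    also have "\<dots> = (1-t) * a + t * b"
      by (simp only: a_def b_def sum.distrib sum_distrib_left)
    finally have "(\<Sum>i\<in>UNIV. real (k$i) * ln (y$i)) = (1-t) * a + t * b" .
    then have "vpow y k = exp ((1-t) *\<^sub>R a + t *\<^sub>R b)"
      using vpow_exp[OF ypos] by simp
    also have "\<dots> \<le> (1-t) * exp a + t * exp b"
      by (rule convex_onD[OF exp_convex]) (use t in auto)
    also have "exp a = vpow (r *\<^sub>R \<phi>) k"
      unfolding a_def by (rule vpow_exp[symmetric]) (use r \<phi>pos in simp)
    also have "exp b = vpow (r *\<^sub>R \<psi>) k"
      unfolding b_def by (rule vpow_exp[symmetric]) (use r \<psi>pos in simp)
    finally have "vpow y k \<le> (1-t) * vpow (r *\<^sub>R \<phi>) k + t * vpow (r *\<^sub>R \<psi>) k" .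
    then have "vpow y k / gfact g k \<le> ((1-t) * vpow (r *\<^sub>R \<phi>) k + t * vpow (r *\<^sub>R \<psi>) k) / gfact g k"
      using gfact_pos[OF nonneg ND, of k] by (simp add: divide_right_mono)
    then show ?thesis by (simp add: weight_def add_divide_distrib)
  qed
  have s\<phi>: "weight g (r *\<^sub>R \<phi>) summable_on UNIV" using r\<phi> by (simp add: fug_dom_def)
  have s\<psi>: "weight g (r *\<^sub>R \<psi>) summable_on UNIV" using r\<psi> by (simp add: fug_dom_def)
  have "(\<lambda>k. (1-t) * weight g (r *\<^sub>R \<phi>) k + t * weight g (r *\<^sub>R \<psi>) k) summable_on UNIV"
    by (intro summable_on_add summable_on_cmult_right s\<phi> s\<psi>)
  then have "weight g y summable_on UNIV"
    by (rule summable_on_comparison_test)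
       (use key weight_nonneg[OF nonneg ND] ypos in \<open>auto simp: less_imp_le\<close>)
  then have "y \<in> fug_dom g" using ypos by (simp add: fug_dom_def less_imp_le)
  then show ?thesis unfolding y_def
    by (rule U_char2[OF nonneg ND _ r(1), rotated]) (simp add: gpath_pos)
qed

lemma mean_inj: "inj_on (mean g) (U g)"
proof (rule inj_onI, rule ccontr)
  fix \<phi> \<psi> assume \<phi>U: "\<phi> \<in> U g" and \<psi>U: "\<psi> \<in> U g" and eq: "mean g \<phi> = mean g \<psi>" and ne: "\<phi> \<noteq> \<psi>"
  have \<phi>pos: "\<forall>i. \<phi>$i > 0" and \<psi>pos: "\<forall>i. \<psi>$i > 0" using U_char1 \<phi>U \<psi>U by blast+
  define d where "d = (\<chi> i. ln (\<psi>$i) - ln (\<phi>$i))"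
  have d0: "d \<noteq> 0"
  proof
    assume "d = 0"
    then have "ln (\<psi>$i) = ln (\<phi>$i)" for i by (simp add: d_def vec_eq_iff)
    then have "\<psi>$i = \<phi>$i" for i using \<phi>pos \<psi>pos by simp
    then show False using ne by (simp add: vec_eq_iff)
  qed
  define h where "h t = d \<bullet> mean g (gpath \<phi> \<psi> t)" for t
  have "h 0 < h 1"
  proof (rule DERIV_pos_imp_increasing[of 0 1 h])
    fix t :: real assume t: "0 \<le> t" "t \<le> 1"
    define v where "v = (\<chi> i. gpath \<phi> \<psi> t $ i * (ln (\<psi>$i) - ln (\<phi>$i)))"
    have \<gamma>U: "gpath \<phi> \<psi> t \<in> U g" by (rule gpath_in_U[OF \<phi>U \<psi>U t])
    have "((\<lambda>t. mean g (gpath \<phi> \<psi> t)) has_derivative (\<lambda>s. DM g (gpath \<phi> \<psi> t) (s *\<^sub>R v))) (at t)"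
      using has_derivative_compose[OF gpath_deriv dmean[OF nonneg ND \<gamma>U]] by (simp add: v_def)
    then have "(h has_derivative (\<lambda>s. d \<bullet> DM g (gpath \<phi> \<psi> t) (s *\<^sub>R v))) (at t)"
      unfolding h_def by (rule has_derivative_inner_right)
    moreover have "(\<lambda>s. d \<bullet> DM g (gpath \<phi> \<psi> t) (s *\<^sub>R v)) = (*) (d \<bullet> DM g (gpath \<phi> \<psi> t) v)"
      by (rule ext) (simp add: DM_scale[OF nonneg ND] mult.commute)
    ultimately have D: "(h has_real_derivative (d \<bullet> DM g (gpath \<phi> \<psi> t) v)) (at t)"
      by (simp add: has_field_derivative_def)
    have "d \<bullet> DM g (gpath \<phi> \<psi> t) v = (\<Sum>i\<in>UNIV. \<Sum>l\<in>UNIV. d$i * d$l * Cv g i l (gpath \<phi> \<psi> t))"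
      unfolding inner_vec_def DM_def[OF nonneg ND]
    proof (intro sum.cong refl)
      fix i
      have "(\<Sum>m\<in>UNIV. v$m * (Cv g i m (gpath \<phi> \<psi> t) / gpath \<phi> \<psi> t $ m))
          = (\<Sum>m\<in>UNIV. d$m * Cv g i m (gpath \<phi> \<psi> t))"
      proof (intro sum.cong refl)
        fix m
        have "gpath \<phi> \<psi> t $ m \<noteq> 0" using gpath_pos[of \<phi> \<psi> t m] by simp
        then show "v$m * (Cv g i m (gpath \<phi> \<psi> t) / gpath \<phi> \<psi> t $ m) = d$m * Cv g i m (gpath \<phi> \<psi> t)"
          by (simp add: v_def d_def)
      qed
      then show "d $ i \<bullet> (\<chi> i. \<Sum>m\<in>UNIV. v $ m * (Cv g i m (gpath \<phi> \<psi> t) / gpath \<phi> \<psi> t $ m)) $ i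
          = (\<Sum>l\<in>UNIV. d $ i * d $ l * Cv g i l (gpath \<phi> \<psi> t))"
        by (simp add: sum_distrib_left mult.assoc)
    qed
    also have "\<dots> > 0" by (rule Q_pos[OF nonneg ND \<gamma>U d0])
    finally show "\<exists>y. (h has_real_derivative y) (at t) \<and> 0 < y" using D by blast
  qed simp
  moreover have "h 0 = h 1"
    using eq by (simp add: h_def gpath_0[OF \<phi>pos] gpath_1[OF \<psi>pos])
  ultimately show False by simp
qed

end

lemma sum_axis_vec: "(\<Sum>m\<in>UNIV. axis l (1::real) $ m *\<^sub>R F m) = (F (l::'n::finite) :: 'a::real_vector)"
proof -
  have "(\<Sum>m\<in>UNIV. axis l (1::real) $ m *\<^sub>R F m) = (\<Sum>m\<in>UNIV. if m = l then F m else 0)"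
    by (intro sum.cong) (auto simp: axis_def)
  then show ?thesis by simp
qed

lemma key_limit:
  fixes Kf Lf :: "real \<Rightarrow> real^'n::finite \<Rightarrow> real^'n" and C :: "'n \<Rightarrow> real \<Rightarrow> real^'n"
  assumes lam: "lam > 0"
    and evK: "eventually (\<lambda>s. linear (Kf s) \<and> (\<forall>z. Kf s (Lf s z) = z)) (at 0)"
    and K0: "\<forall>z. Kf 0 z = lam *\<^sub>R z"
    and Lform: "\<forall>s z. Lf s z = (\<Sum>m\<in>UNIV. z$m *\<^sub>R C m s)"
    and L0: "\<forall>z. Lf 0 z = (1/lam) *\<^sub>R z"
    and Ccont: "\<forall>m. filterlim (C m) (nhds (C m 0)) (at 0)"
    and qlim: "filterlim (\<lambda>s. (C l s - C l 0) /\<^sub>R s) (nhds u') (at 0)"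
  shows "filterlim (\<lambda>s. (Kf s (axis l 1) - Kf 0 (axis l 1)) /\<^sub>R s) (nhds (- (lam * lam) *\<^sub>R u')) (at 0)"
proof -
  define eps where "eps s = (\<Sum>m\<in>UNIV. norm (C m s - C m 0))" for s
  have epsnn: "eps s \<ge> 0" for s unfolding eps_def by (intro sum_nonneg) auto
  have eps0: "filterlim eps (nhds 0) (at 0)"
    unfolding eps_def
  proof (rule tendsto_null_sum)
    fix m
    have "filterlim (\<lambda>s. C m s - C m 0) (nhds 0) (at 0)"
      by (rule iffD1[OF Lim_null Ccont[rule_format, of m]])
    then show "filterlim (\<lambda>s. norm (C m s - C m 0)) (nhds 0) (at 0)"
      by (rule tendsto_norm_zero)
  qed
  have Ldiff: "norm (Lf 0 z - Lf s z) \<le> norm z * eps s" for s z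
  proof -
    have eq: "Lf 0 z - Lf s z = (\<Sum>m\<in>UNIV. z$m *\<^sub>R (C m 0 - C m s))"
      using Lform by (simp add: sum_subtractf[symmetric] scaleR_diff_right)
    have "norm (Lf 0 z - Lf s z) \<le> (\<Sum>m\<in>UNIV. norm (z$m *\<^sub>R (C m 0 - C m s)))"
      unfolding eq by (rule norm_sum)
    also have "\<dots> \<le> (\<Sum>m\<in>UNIV. norm z * norm (C m s - C m 0))"
    proof (intro sum_mono)
      fix m
      have "\<bar>z$m\<bar> \<le> norm z" by (rule component_le_norm_cart)
      then show "norm (z$m *\<^sub>R (C m 0 - C m s)) \<le> norm z * norm (C m s - C m 0)"
        by (simp add: norm_minus_commute mult_right_mono)
    qed
    also have "\<dots> = norm z * eps s" by (simp add: eps_def sum_distrib_left)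
    finally show ?thesis .
  qed
  have ev2: "eventually (\<lambda>s. lam * eps s < 1/2) (at 0)"
  proof -
    have "filterlim (\<lambda>s. lam * eps s) (nhds (lam * 0)) (at 0)"
      by (intro tendsto_mult tendsto_const eps0)
    then have "filterlim (\<lambda>s. lam * eps s) (nhds 0) (at 0)" by simp
    from order_tendstoD(2)[OF this, of "1/2"] show ?thesis by simp
  qed
  have ev3: "eventually (\<lambda>s::real. s \<noteq> 0) (at 0)" by (simp add: eventually_at_filter)
  define e :: "real^'n" where "e = axis l 1"
  define V where "V = - (lam * lam) *\<^sub>R u'"
  define q where "q s = (C l s - C l 0) /\<^sub>R s" for s
  define G where "G s = lam * (2 * lam * norm (q s - u') + lam * (2 * lam) * (norm u' * eps s))" for s
  have Lfe: "Lf s e = C l s" for s using Lform by (simp add: e_def sum_axis_vec)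
  have bound: "eventually (\<lambda>s. norm ((Kf s e - Kf 0 e) /\<^sub>R s - V) \<le> G s) (at 0)"
    using evK ev2 ev3
  proof eventually_elim
    case (elim s)
    define K where "K = Kf s"
    have linK: "linear K" and inv: "\<And>z. K (Lf s z) = z" using elim by (auto simp: K_def)
    have blK: "bounded_linear K" using linK by (simp add: linear_conv_bounded_linear)
    have iden: "K z = lam *\<^sub>R z + lam *\<^sub>R K (Lf 0 z - Lf s z)" for z
    proof -
      have h: "K (Lf 0 z - Lf s z) = (1/lam) *\<^sub>R K z - z"
        using inv L0 by (simp add: linear_diff[OF linK] linear_cmul[OF linK])
      have "lam *\<^sub>R z + lam *\<^sub>R K (Lf 0 z - Lf s z) = lam *\<^sub>R z + lam *\<^sub>R ((1/lam) *\<^sub>R K z - z)"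
        by (simp only: h)
      also have "\<dots> = K z" using lam by (simp add: scaleR_diff_right)
      finally show ?thesis by simp
    qed
    define B where "B = onorm K"
    have B0: "B \<ge> 0" unfolding B_def by (rule onorm_pos_le[OF blK])
    have nK: "norm (K w) \<le> B * norm w" for w unfolding B_def by (rule Operator_Norm.onorm[OF blK])
    have "norm (K z) \<le> (lam + lam * B * eps s) * norm z" for z
    proof -
      have "norm (K z) \<le> norm (lam *\<^sub>R z) + norm (lam *\<^sub>R K (Lf 0 z - Lf s z))"
        by (subst iden) (rule norm_triangle_ineq)
      also have "\<dots> = lam * norm z + lam * norm (K (Lf 0 z - Lf s z))" using lam by simp
      also have "\<dots> \<le> lam * norm z + lam * (B * (norm z * eps s))"
      proof -
        have "norm (K (Lf 0 z - Lf s z)) \<le> B * norm (Lf 0 z - Lf s z)" by (rule nK)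
        also have "\<dots> \<le> B * (norm z * eps s)" using Ldiff B0 by (simp add: mult_left_mono)
        finally show ?thesis using lam by simp
      qed
      also have "\<dots> = (lam + lam * B * eps s) * norm z" by (simp add: algebra_simps)
      finally show ?thesis .
    qed
    then have "B \<le> lam + lam * B * eps s" unfolding B_def by (rule onorm_le)
    moreover have "B * (lam * eps s) \<le> B * (1/2)" using elim B0 by (intro mult_left_mono) auto
    moreover have "lam * B * eps s = B * (lam * eps s)" by (simp only: ac_simps)
    ultimately have B2: "B \<le> 2 * lam" by linarith
    have ve: "Kf s e - Kf 0 e = lam *\<^sub>R K (C l 0 - C l s)"
      using iden[of e] K0 by (simp add: K_def Lfe)
    have "(Kf s e - Kf 0 e) /\<^sub>R s - V = - lam *\<^sub>R (K (q s - u') + (K u' - lam *\<^sub>R u'))"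
    proof -
      have k1: "K (q s) = inverse s *\<^sub>R K (C l s - C l 0)"
        unfolding q_def by (rule linear_cmul[OF linK])
      have k2: "K (C l 0 - C l s) = - K (C l s - C l 0)"
        by (metis linear_neg[OF linK] minus_diff_eq)
      have "(Kf s e - Kf 0 e) /\<^sub>R s = - lam *\<^sub>R K (q s)"
        unfolding ve k1 k2 by simp
      moreover have "K (q s - u') = K (q s) - K u'" by (rule linear_diff[OF linK])
      ultimately show ?thesis by (simp add: V_def algebra_simps)
    qed
    also have "K u' - lam *\<^sub>R u' = lam *\<^sub>R K (Lf 0 u' - Lf s u')" using iden[of u'] by simp
    finally have eq: "(Kf s e - Kf 0 e) /\<^sub>R s - V = - lam *\<^sub>R (K (q s - u') + lam *\<^sub>R K (Lf 0 u' - Lf s u'))" .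
    have "norm (K (q s - u') + lam *\<^sub>R K (Lf 0 u' - Lf s u'))
        \<le> norm (K (q s - u')) + lam * norm (K (Lf 0 u' - Lf s u'))"
      by (rule order_trans[OF norm_triangle_ineq]) (use lam in simp)
    also have "\<dots> \<le> 2 * lam * norm (q s - u') + lam * (2 * lam) * (norm u' * eps s)"
    proof -
      have "norm (K (q s - u')) \<le> 2 * lam * norm (q s - u')"
        using nK[of "q s - u'"] B2 by (meson mult_right_mono norm_ge_zero order_trans)
      moreover have "norm (K (Lf 0 u' - Lf s u')) \<le> (2 * lam) * (norm u' * eps s)"
      proof -
        have "norm (K (Lf 0 u' - Lf s u')) \<le> B * norm (Lf 0 u' - Lf s u')" by (rule nK)
        also have "\<dots> \<le> B * (norm u' * eps s)" using Ldiff B0 by (simp add: mult_left_mono)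
        also have "\<dots> \<le> (2 * lam) * (norm u' * eps s)" using B2 epsnn by (simp add: mult_right_mono)
        finally show ?thesis .
      qed
      moreover have "lam * norm (K (Lf 0 u' - Lf s u')) \<le> lam * ((2 * lam) * (norm u' * eps s))"
        by (rule mult_left_mono[OF calculation(2)]) (use lam in simp)
      then have "lam * norm (K (Lf 0 u' - Lf s u')) \<le> lam * (2 * lam) * (norm u' * eps s)"
        by (simp only: mult.assoc)
      ultimately show ?thesis by linarith
    qed
    finally have "norm (K (q s - u') + lam *\<^sub>R K (Lf 0 u' - Lf s u')) \<le> 2 * lam * norm (q s - u') + lam * (2 * lam) * (norm u' * eps s)" .
    then have "lam * norm (K (q s - u') + lam *\<^sub>R K (Lf 0 u' - Lf s u'))
        \<le> lam * (2 * lam * norm (q s - u') + lam * (2 * lam) * (norm u' * eps s))"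
      by (rule mult_left_mono) (use lam in simp)
    then show ?case unfolding eq G_def using lam by (simp add: abs_of_pos)
  qed
  have G0: "filterlim G (nhds 0) (at 0)"
  proof -
    have "filterlim (\<lambda>s. q s - u') (nhds 0) (at 0)" unfolding q_def by (rule iffD1[OF Lim_null qlim])
    then have n: "filterlim (\<lambda>s. norm (q s - u')) (nhds 0) (at 0)" by (rule tendsto_norm_zero)
    have "filterlim G (nhds (lam * (2 * lam * 0 + lam * (2 * lam) * (norm u' * 0)))) (at 0)"
      unfolding G_def by (intro tendsto_intros n eps0)
    then show ?thesis by simp
  qed
  have "filterlim (\<lambda>s. (Kf s e - Kf 0 e) /\<^sub>R s - V) (nhds 0) (at 0)"
    by (rule Lim_null_comparison[OF bound G0])
  then have "filterlim (\<lambda>s. (Kf s e - Kf 0 e) /\<^sub>R s) (nhds V) (at 0)" by (rule iffD2[OF Lim_null])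
  then show ?thesis unfolding e_def V_def .
qed

lemma vec_axis_expansion: "(\<Sum>i\<in>UNIV. x$i *\<^sub>R axis i (1::real)) = (x :: real^'n::finite)"
proof -
  have "(\<Sum>i\<in>UNIV. x$i *\<^sub>R axis i (1::real)) $ k = x $ k" for k
  proof -
    have "(\<Sum>i\<in>UNIV. x$i *\<^sub>R axis i (1::real)) $ k = (\<Sum>i\<in>UNIV. if i = k then x$i else 0)"
      unfolding sum_component by (intro sum.cong) (auto simp: axis_def)
    then show ?thesis by simp
  qed
  then show ?thesis by (simp add: vec_eq_iff)
qed

lemma partial_eq:
  fixes F :: "real^'n::finite \<Rightarrow> real^'n"
  assumes dF: "(F has_derivative F') (at a)"
  shows "partial j (\<lambda>x. F x $ i) a = F' (axis j 1) $ i"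
proof -
  have b: "((\<lambda>t. a + t *\<^sub>R axis j 1) has_derivative (\<lambda>s. s *\<^sub>R axis j 1)) (at 0)"
    by (auto intro!: derivative_eq_intros)
  have dF': "(F has_derivative F') (at (a + 0 *\<^sub>R axis j 1))" using dF by simp
  have "((\<lambda>t. F (a + t *\<^sub>R axis j 1)) has_derivative (\<lambda>s. F' (s *\<^sub>R axis j 1))) (at 0)"
    by (rule has_derivative_compose[OF b dF'])
  then have "((\<lambda>t. F (a + t *\<^sub>R axis j 1) $ i) has_derivative (\<lambda>s. F' (s *\<^sub>R axis j 1) $ i)) (at 0)"
    by (rule has_derivative_compose[OF _ vec_nth_has_derivative])
  moreover have "(\<lambda>s. F' (s *\<^sub>R axis j 1) $ i) = (*) (F' (axis j 1) $ i)"
    using linear_cmul[OF has_derivative_linear[OF dF]] by (simp add: fun_eq_iff mult.commute)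
  ultimately have "((\<lambda>t. F (a + t *\<^sub>R axis j 1) $ i) has_field_derivative F' (axis j 1) $ i) (at 0)"
    by (simp add: has_field_derivative_def)
  then show ?thesis unfolding partial_def by (rule DERIV_imp_deriv)
qed

lemma vderiv_quot:
  fixes f :: "real \<Rightarrow> real^'n::finite"
  assumes "(f has_derivative (\<lambda>s. s *\<^sub>R u')) (at 0)"
  shows "filterlim (\<lambda>s. (f s - f 0) /\<^sub>R s) (nhds u') (at 0)"
proof -
  have "filterlim (\<lambda>h. norm (f (0 + h) - f 0 - h *\<^sub>R u') / norm h) (nhds 0) (at 0)"
    using assms unfolding has_derivative_at by blast
  moreover have "eventually (\<lambda>h. norm (f (0 + h) - f 0 - h *\<^sub>R u') / norm h = norm ((f h - f 0) /\<^sub>R h - u')) (at 0)"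
  proof -
    have "eventually (\<lambda>h::real. h \<noteq> 0) (at 0)" by (simp add: eventually_at_filter)
    then show ?thesis
    proof eventually_elim
      case (elim h)
      have "(f h - f 0) /\<^sub>R h - u' = inverse h *\<^sub>R (f h - f 0 - h *\<^sub>R u')"
        using elim by (simp add: algebra_simps)
      then have "norm ((f h - f 0) /\<^sub>R h - u') = norm (f h - f 0 - h *\<^sub>R u') / \<bar>h\<bar>"
        by (simp add: divide_inverse_commute)
      then show ?case by simp
    qed
  qed
  ultimately have "filterlim (\<lambda>h. norm ((f h - f 0) /\<^sub>R h - u')) (nhds 0) (at 0)"
    by (rule Lim_transform_eventually)
  then have "filterlim (\<lambda>h. (f h - f 0) /\<^sub>R h - u') (nhds 0) (at 0)"
    by (rule tendsto_norm_zero_cancel)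
  then show ?thesis by (rule iffD2[OF Lim_null])
qed

definition Kmap :: "('n::finite \<Rightarrow> nat^'n \<Rightarrow> real) \<Rightarrow> real^'n \<Rightarrow> real^'n \<Rightarrow> real^'n" where
  "Kmap g a = (SOME K. linear K \<and> K \<circ> DM g (gtilde g a) = id)"

context
  fixes g :: "'n::finite \<Rightarrow> nat^'n \<Rightarrow> real"
  assumes nonneg: "\<forall>i k. g i k \<ge> 0" and ND: "cond_ND g"
begin

lemma mean_cont: "continuous_on (U g) (mean g)"
  by (rule continuous_at_imp_continuous_on)
     (use dmean[OF nonneg ND] has_derivative_continuous in blast)

lemma dens_open: "open (dens_dom g)"
  unfolding dens_dom_def
  by (rule invariance_of_domain[OF mean_cont open_interior mean_inj[OF nonneg ND]])

lemma gtilde_props: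
  assumes "a \<in> dens_dom g"
  shows "gtilde g a \<in> U g \<and> mean g (gtilde g a) = a"
proof -
  have "\<exists>\<phi>. \<phi> \<in> interior (fug_dom g) \<and> mean g \<phi> = a" using assms by (auto simp: dens_dom_def)
  then show ?thesis unfolding gtilde_def by (rule someI_ex)
qed

lemma gtilde_mean: "\<phi> \<in> U g \<Longrightarrow> gtilde g (mean g \<phi>) = \<phi>"
proof -
  assume \<phi>: "\<phi> \<in> U g"
  have "mean g \<phi> \<in> dens_dom g" using \<phi> by (simp add: dens_dom_def)
  then have "gtilde g (mean g \<phi>) \<in> U g" "mean g (gtilde g (mean g \<phi>)) = mean g \<phi>"
    using gtilde_props by auto
  then show ?thesis using mean_inj[OF nonneg ND] \<phi> by (meson inj_onD)
qed

lemma gtilde_cont: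
  assumes aD: "a \<in> dens_dom g"
  shows "continuous (at a) (gtilde g)"
proof -
  obtain h where h: "homeomorphism (U g) (mean g ` U g) (mean g) h"
    using invariance_of_domain_homeomorphism[OF open_interior mean_cont _ mean_inj[OF nonneg ND]] by auto
  have "continuous_on (dens_dom g) h" using h by (simp add: homeomorphism_def dens_dom_def)
  moreover have "h b = gtilde g b" if bD: "b \<in> dens_dom g" for b
  proof -
    obtain \<phi> where \<phi>: "\<phi> \<in> U g" "b = mean g \<phi>" using bD unfolding dens_dom_def by blast
    have "h (mean g \<phi>) = \<phi>" using h \<phi>(1) by (simp add: homeomorphism_def)
    then show ?thesis using gtilde_mean[OF \<phi>(1)] \<phi>(2) by simp
  qed
  ultimately have "continuous_on (dens_dom g) (gtilde g)" using continuous_on_cong by blast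
  then show ?thesis using dens_open aD continuous_on_eq_continuous_at by blast
qed

lemma DM_inj:
  assumes xU: "x \<in> U g"
  shows "inj (DM g x)"
proof -
  have lin: "linear (DM g x)" by (rule linear_DM[OF nonneg ND xU])
  have xpos: "\<forall>i. x$i > 0" using U_char1[OF xU] by blast
  have "h = 0" if h0: "DM g x h = 0" for h
  proof (rule ccontr)
    assume hne: "h \<noteq> 0"
    define w where "w = (\<chi> m. h$m / x$m)"
    have wne: "w \<noteq> 0"
    proof
      assume w0: "w = 0"
      have "h$m = 0" for m
      proof -
        have "h$m / x$m = 0" using w0 by (metis w_def vec_lambda_beta zero_index)
        then show ?thesis using xpos[rule_format, of m] by simp
      qed
      then show False using hne by (simp add: vec_eq_iff)
    qed
    have rowi: "(\<Sum>l\<in>UNIV. w$l * Cv g i l x) = 0" for i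
    proof -
      have "(\<Sum>l\<in>UNIV. w$l * Cv g i l x) = DM g x h $ i"
        by (simp add: DM_def[OF nonneg ND] w_def)
      then show ?thesis using h0 by simp
    qed
    have "(\<Sum>i\<in>UNIV. \<Sum>l\<in>UNIV. w$i * w$l * Cv g i l x) = (\<Sum>i\<in>UNIV. w$i * (\<Sum>l\<in>UNIV. w$l * Cv g i l x))"
      by (simp add: sum_distrib_left mult.assoc)
    also have "\<dots> = 0" using rowi by simp
    finally show False using Q_pos[OF nonneg ND xU wne] by simp
  qed
  then show ?thesis using linear_injective_0[OF lin] by blast
qed

lemma Kmap_props:
  assumes aD: "a \<in> dens_dom g"
  shows "linear (Kmap g a) \<and> (\<forall>z. Kmap g a (DM g (gtilde g a) z) = z) \<and> (\<forall>z. DM g (gtilde g a) (Kmap g a z) = z)"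
proof -
  have xU: "gtilde g a \<in> U g" using gtilde_props[OF aD] by blast
  have lin: "linear (DM g (gtilde g a))" by (rule linear_DM[OF nonneg ND xU])
  have "\<exists>K. linear K \<and> K \<circ> DM g (gtilde g a) = id"
    by (rule linear_injective_left_inverse[OF lin DM_inj[OF xU]])
  then have K: "linear (Kmap g a) \<and> Kmap g a \<circ> DM g (gtilde g a) = id"
    unfolding Kmap_def by (rule someI_ex)
  then have "DM g (gtilde g a) \<circ> Kmap g a = id"
    using linear_inverse_left[OF lin] by blast
  then show ?thesis using K by (simp add: fun_eq_iff)
qed

lemma gtilde_deriv:
  assumes aD: "a \<in> dens_dom g"
  shows "(gtilde g has_derivative Kmap g a) (at a)"
proof (rule has_derivative_inverse_basic)
  have xU: "gtilde g a \<in> U g" using gtilde_props[OF aD] by blast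
  show "(mean g has_derivative DM g (gtilde g a)) (at (gtilde g a))" by (rule dmean[OF nonneg ND xU])
  show "bounded_linear (Kmap g a)" using Kmap_props[OF aD] by (simp add: linear_conv_bounded_linear)
  show "Kmap g a \<circ> DM g (gtilde g a) = id" using Kmap_props[OF aD] by (simp add: fun_eq_iff)
  show "continuous (at a) (gtilde g)" by (rule gtilde_cont[OF aD])
  show "open (dens_dom g)" by (rule dens_open)
  show "a \<in> dens_dom g" by (rule aD)
  show "\<And>z. z \<in> dens_dom g \<Longrightarrow> mean g (gtilde g z) = z" using gtilde_props by blast
qed

lemma kap_sym: "kap g i j l x = kap g j i l x" "kap g i j l x = kap g i l j x"
  unfolding kap_def using S3_sym[OF nonneg ND] S2_sym[OF nonneg ND]
  by (simp_all add: algebra_simps)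

end

theorem proposition6p1:
  fixes g :: "'n::finite \<Rightarrow> nat^'n \<Rightarrow> real"
    and a0 :: "real^'n" and lam c :: real
  assumes nonneg: "\<forall>i k. g i k \<ge> 0"
    and ND: "cond_ND g" and INV: "cond_INV g" and ORI: "cond_ORI g"
    and a0_pos: "\<forall>i. a0 $ i > 0"
    and a0_int: "a0 \<in> interior (dens_dom g)"
    and FC_diag: "\<forall>i. partial i (\<lambda>a. gtilde g a $ i) a0 = lam"
    and FC_off: "\<forall>i j. i \<noteq> j \<longrightarrow> partial j (\<lambda>a. gtilde g a $ i) a0 = 0"
    and lam_pos: "lam > 0"
  defines "\<gamma> \<equiv> (\<lambda>i j l. partial j (\<lambda>b. partial l (\<lambda>a. gtilde g a $ i) b) a0)"
    and "q \<equiv> (\<lambda>i. sqrt (gtilde g a0 $ i))"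
  defines "\<Gamma> \<equiv> (\<lambda>i j l. c / lam powr (3/2) * (q j * q l / q i) * \<gamma> i j l)"
  shows "\<forall>i j l. \<Gamma> i j l = \<Gamma> i l j \<and> \<Gamma> i j l = \<Gamma> j i l"
proof -
  have D_open: "open (dens_dom g)" by (rule dens_open[OF nonneg ND])
  have a0D: "a0 \<in> dens_dom g" using a0_int interior_subset by blast
  define x where "x = gtilde g a0"
  have xU: "x \<in> U g" using gtilde_props[OF nonneg ND a0D] by (simp add: x_def)
  have xpos: "\<forall>i. x$i > 0" using U_char1[OF xU] by blast
  define K0 where "K0 = Kmap g a0"
  have dK0: "(gtilde g has_derivative K0) (at a0)" unfolding K0_def by (rule gtilde_deriv[OF nonneg ND a0D])
  have KP: "linear K0" "\<And>z. K0 (DM g x z) = z" "\<And>z. DM g x (K0 z) = z"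
    using Kmap_props[OF nonneg ND a0D] by (simp_all add: K0_def x_def)
  have K0e: "K0 (axis j 1) $ i = (if i = j then lam else 0)" for i j
  proof -
    have "partial j (\<lambda>a. gtilde g a $ i) a0 = K0 (axis j 1) $ i" by (rule partial_eq[OF dK0])
    then show ?thesis using FC_diag FC_off by (cases "i = j") auto
  qed
  have K0lam: "K0 z = lam *\<^sub>R z" for z
  proof -
    have "K0 z = K0 (\<Sum>j\<in>UNIV. z$j *\<^sub>R axis j 1)" by (simp add: vec_axis_expansion)
    also have "\<dots> = (\<Sum>j\<in>UNIV. z$j *\<^sub>R K0 (axis j 1))"
      by (simp add: linear_sum[OF KP(1)] linear_cmul[OF KP(1)])
    also have "\<dots> = lam *\<^sub>R z"
    proof -
      have "(\<Sum>j\<in>UNIV. z$j *\<^sub>R K0 (axis j 1)) $ i = lam * z $ i" for i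
      proof -
        have "(\<Sum>j\<in>UNIV. z$j *\<^sub>R K0 (axis j 1)) $ i = (\<Sum>j\<in>UNIV. if j = i then z$j * lam else 0)"
          unfolding sum_component by (intro sum.cong refl) (simp add: K0e)
        then show ?thesis by simp
      qed
      then show ?thesis by (simp add: vec_eq_iff)
    qed
    finally show ?thesis .
  qed
  have L0: "DM g x z = (1/lam) *\<^sub>R z" for z
  proof -
    have "lam *\<^sub>R DM g x z = z" using KP(2)[of z] K0lam[of "DM g x z"] by simp
    then have "(1/lam) *\<^sub>R (lam *\<^sub>R DM g x z) = (1/lam) *\<^sub>R z" by simp
    then show ?thesis using lam_pos by simp
  qed
  have Cvx: "Cv g i l x = (if i = l then x$l / lam else 0)" for i l
  proof -
    have "Ncol g l x = DM g x (axis l 1)" by (simp add: DM_Ncol[OF nonneg ND] sum_axis_vec)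
    also have "\<dots> = (1/lam) *\<^sub>R axis l 1" by (rule L0)
    finally have "Ncol g l x $ i = (1/lam) * axis l 1 $ i" by simp
    then have "Cv g i l x / x$l = (if i = l then 1/lam else 0)" by (simp add: Ncol_def axis_def)
    then show ?thesis using xpos[rule_format, of l] by (auto simp: field_simps split: if_splits)
  qed
  have gam: "\<gamma> i j l = - (lam*lam*lam) * ((kap g i j l x / x$j * x$l - Cv g i l x * (axis j 1 $ l)) / (x$l * x$l))"
    for i j l
  proof -
    obtain N' where N': "(Ncol g l has_derivative N') (at x)"
      and N'e: "\<forall>i j. N' (axis j 1) $ i = (kap g i j l x / x$j * x$l - Cv g i l x * (axis j 1 $ l)) / (x$l * x$l)"
      using dNcol[OF nonneg ND xU, of l] by blast
    define b where "b s = a0 + s *\<^sub>R axis j 1" for s :: real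
    have db: "(b has_derivative (\<lambda>s. s *\<^sub>R axis j 1)) (at s)" for s
      unfolding b_def by (auto intro!: derivative_eq_intros)
    have b0: "b 0 = a0" by (simp add: b_def)
    have bcont: "continuous_on UNIV b" unfolding b_def by (intro continuous_intros)
    have evD_nhds: "eventually (\<lambda>s. b s \<in> dens_dom g) (nhds 0)"
    proof -
      have "open (b -` dens_dom g)" by (rule open_vimage[OF D_open bcont])
      moreover have "0 \<in> b -` dens_dom g" using a0D b0 by simp
      ultimately show ?thesis using eventually_nhds_in_open by fastforce
    qed
    have evD: "eventually (\<lambda>s. b s \<in> dens_dom g) (at 0)"
      unfolding eventually_at_filter by (rule eventually_mono[OF evD_nhds]) auto
    have chain: "((\<lambda>s. F (gtilde g (b s))) has_derivative (\<lambda>s. F' (K0 (s *\<^sub>R axis j 1)))) (at 0)"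
      if dF: "(F has_derivative F') (at x)" for F :: "real^'n \<Rightarrow> real^'n" and F'
    proof -
      have dK0': "(gtilde g has_derivative K0) (at (b 0))" using dK0 b0 by simp
      have dF': "(F has_derivative F') (at (gtilde g (b 0)))" using dF b0 by (simp add: x_def)
      show ?thesis by (rule has_derivative_compose[OF has_derivative_compose[OF db dK0'] dF'])
    qed
    define Kf where "Kf s = Kmap g (b s)" for s
    define Lf where "Lf s = DM g (gtilde g (b s))" for s
    define C where "C m s = Ncol g m (gtilde g (b s))" for m s
    have evK: "eventually (\<lambda>s. linear (Kf s) \<and> (\<forall>z. Kf s (Lf s z) = z)) (at 0)"
      using evD by eventually_elim (use Kmap_props[OF nonneg ND] in \<open>simp add: Kf_def Lf_def\<close>)
    have K0': "\<forall>z. Kf 0 z = lam *\<^sub>R z" using K0lam by (simp add: Kf_def b0 K0_def)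
    have Lform: "\<forall>s z. Lf s z = (\<Sum>m\<in>UNIV. z$m *\<^sub>R C m s)"
      by (simp add: Lf_def C_def DM_Ncol[OF nonneg ND])
    have L0': "\<forall>z. Lf 0 z = (1/lam) *\<^sub>R z" using L0 by (simp add: Lf_def b0 x_def)
    have Ccont: "\<forall>m. filterlim (C m) (nhds (C m 0)) (at 0)"
    proof
      fix m
      obtain Nm where "(Ncol g m has_derivative Nm) (at x)" using dNcol[OF nonneg ND xU, of m] by blast
      from has_derivative_continuous[OF chain[OF this]]
      show "filterlim (C m) (nhds (C m 0)) (at 0)" by (simp add: C_def[abs_def] continuous_at)
    qed
    define u' where "u' = lam *\<^sub>R N' (axis j 1)"
    have qlim: "filterlim (\<lambda>s. (C l s - C l 0) /\<^sub>R s) (nhds u') (at 0)"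
    proof (rule vderiv_quot)
      have linN: "linear N'" using N' by (rule has_derivative_linear)
      have "(\<lambda>s. N' (K0 (s *\<^sub>R axis j 1))) = (\<lambda>s. s *\<^sub>R u')"
        by (simp add: fun_eq_iff K0lam u'_def linear_cmul[OF linN])
      then show "(C l has_derivative (\<lambda>s. s *\<^sub>R u')) (at 0)"
        using chain[OF N'] by (simp add: C_def[abs_def])
    qed
    have KL: "filterlim (\<lambda>s. (Kf s (axis l 1) - Kf 0 (axis l 1)) /\<^sub>R s) (nhds (- (lam * lam) *\<^sub>R u')) (at 0)"
      by (rule key_limit[OF lam_pos evK K0' Lform L0' Ccont qlim])
    have "filterlim (\<lambda>s. ((Kf s (axis l 1) - Kf 0 (axis l 1)) /\<^sub>R s) $ i) (nhds ((- (lam * lam) *\<^sub>R u') $ i)) (at 0)"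
      by (rule tendsto_vec_nth[OF KL])
    then have "filterlim (\<lambda>s. (Kf s (axis l 1) $ i - Kf 0 (axis l 1) $ i) / (s - 0)) (nhds (- (lam * lam) * u' $ i)) (at 0)"
      by (simp add: divide_inverse_commute)
    then have DK: "((\<lambda>s. Kf s (axis l 1) $ i) has_field_derivative (- (lam * lam) * u' $ i)) (at 0)"
      by (simp add: has_field_derivative_iff)
    have evP: "eventually (\<lambda>s. Kf s (axis l 1) $ i = partial l (\<lambda>a. gtilde g a $ i) (b s)) (nhds 0)"
      using evD_nhds by eventually_elim (simp add: Kf_def partial_eq[OF gtilde_deriv[OF nonneg ND]])
    have "((\<lambda>s. partial l (\<lambda>a. gtilde g a $ i) (b s)) has_field_derivative (- (lam * lam) * u' $ i)) (at 0)"
      using DK DERIV_cong_ev[OF refl evP refl] by simp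
    then have "\<gamma> i j l = - (lam * lam) * u' $ i"
      unfolding \<gamma>_def partial_def[of j] b_def[symmetric] by (rule DERIV_imp_deriv)
    then show ?thesis using N'e by (simp add: u'_def)
  qed
  define P where "P = lam powr (3/2)"
  have P: "P > 0" "P * P = lam * lam * lam"
  proof -
    show "P > 0" using lam_pos by (simp add: P_def)
    have "P * P = lam powr (3/2 + 3/2)" unfolding P_def by (rule powr_add[symmetric])
    also have "\<dots> = lam powr 3" by simp
    also have "\<dots> = lam ^ 3" by (rule powr_numeral) (use lam_pos in simp)
    finally show "P * P = lam * lam * lam" by (simp add: power3_eq_cube)
  qed
  have qx: "q m > 0" "q m * q m = x$m" for m
    using xpos[rule_format, of m] by (simp_all add: q_def x_def)
  define F where "F i j l = - c * P * (kap g i j l x / (q i * q j * q l) - (if i = j \<and> j = l then 1 / (lam * q i) else 0))" for i j l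
  have GF: "\<Gamma> i j l = F i j l" for i j l
  proof -
    have "\<Gamma> i j l = c / P * (q j * q l / q i) * (- (P * P) * ((kap g i j l x / (q j * q j) * (q l * q l)
        - Cv g i l x * (axis j 1 $ l)) / ((q l * q l) * (q l * q l))))"
      unfolding \<Gamma>_def gam P(2)[symmetric] qx(2) by (simp add: P_def)
    also have "\<dots> = F i j l"
    proof (cases "j = l")
      case False
      then show ?thesis using qx(1)[of i] qx(1)[of j] qx(1)[of l] P(1)
        by (simp add: F_def axis_def field_simps)
    next
      case True
      show ?thesis
      proof (cases "i = l")
        case False
        then show ?thesis using True qx(1)[of i] qx(1)[of j] qx(1)[of l] P(1)
          by (simp add: F_def axis_def Cvx field_simps)
      next
        case il: True
        have "Cv g i l x = (q l * q l) / lam" using Cvx[of i l] il qx(2)[of l] by simp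
        then show ?thesis using True il qx(1)[of l] P(1) lam_pos
          by (simp add: F_def axis_def field_simps)
      qed
    qed
    finally show ?thesis .
  qed
  have Fsym: "F i j l = F i l j" "F i j l = F j i l" for i j l
    unfolding F_def using kap_sym[OF nonneg ND, of i j l x]
    by (auto simp: ac_simps)
  show ?thesis using GF Fsym by simp
qed

end
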